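(* Let $m\in\mathbb{N}$ and $V\in H_{+}^{-m}$ be a 1-periodic complex-valued distribution, and let $S_\pm(V)=D_{\pm}^{2m}\dotplus V$ be the associated form-sum operators on $L_2(0,1)$. Then the resolvent sets of $S_{\pm}(V)$ are non-empty, and the resolvents $R(\lambda,S_{\pm}(V))$ are compact.
   Context: For $s\in\mathbb{R}$, $H_{+}^{s}$ is the space of formal series $f=\sum_{k\in\mathbb{Z}}\widehat f(2k)e^{i2k\pi x}$ with $\|f\|_{H_+^s}^2=\sum_k\langle 2k\rangle^{2s}|\widehat f(2k)|^2<\infty$, and $H_{-}^{s}$ is the space of formal series $f=\sum_{k}\widehat f(2k+1)e^{i(2k+1)\pi x}$ with $\|f\|_{H_-^s}^2=\sum_k\langle 2k+1\rangle^{2s}|\widehat f(2k+1)|^2<\infty$, where $\langle k\rangle=1+|k|$; $H_\pm^0=L_2(0,1)$. $\langle\cdot,\cdot\rangle_{\pm}$ is the pairing between $H_\pm^{s}$ and $H_\pm^{-s}$ extending the $L_2(0,1)$ inner product. $D_\pm^{2m}=|{-i\,d/dx}|^{2m}$ acts as multiplication by $(n\pi)^{2m}$ on the mode $e^{in\pi x}$. For $u\in H_\pm^{m}$, $V(x)u=\sum_n\big(\sum_j\widehat V(n-j)\widehat u(j)\big)e^{in\pi x}\in H_\pm^{-m}$. $S_\pm(V)$ is the $m$-sectorial operator associated with the closed sectorial form $\langle D_{\pm}^{2m}u,v\rangle_{\pm}+\langle V(x)u,v\rangle_{\pm}$ on $H_\pm^m$; explicitly $\mathrm{Dom}(S_{\pm})=\{u\in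 H_{\pm}^{m}\mid D_{\pm}^{2m}u+V(x)u\in L_{2}(0,1)\}$, $S_\pm(V)u=D_{\pm}^{2m}u+V(x)u$. $R(\lambda,A)=(A-\lambda I)^{-1}$. *)

theory Defs
  imports "HOL-Analysis.Analysis"
begin

text \<open>Elements of the spaces H_+^s / H_-^s are represented by their Fourier
coefficient sequences f :: int => complex, where f n is the coefficient of
the mode e^{i n pi x}.  The flag p = True stands for the sign "+" (only even
frequencies n = 2k occur), p = False for the sign "-" (only odd frequencies
n = 2k+1 occur).  H_p^0 is L_2(0,1), written
in the orthonormal basis (e^{i n pi x})_{n in freqs p}.\<close>

definition freqs :: "bool \<Rightarrow> int set" where
  "freqs p = (if p then {n. even n} else {n. odd n})"

definition bracket :: "int \<Rightarrow> real" where
  "bracket n = 1 + real_of_int \<bar>n\<bar>"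

definition Hs :: "bool \<Rightarrow> real \<Rightarrow> (int \<Rightarrow> complex) set" where
  "Hs p s = {f. (\<forall>n. n \<notin> freqs p \<longrightarrow> f n = 0) \<and>
                (\<lambda>n. bracket n powr (2 * s) * (cmod (f n))\<^sup>2) summable_on UNIV}"

definition l2norm :: "(int \<Rightarrow> complex) \<Rightarrow> real" where
  "l2norm f = sqrt (\<Sum>\<^sub>\<infinity>n. (cmod (f n))\<^sup>2)"

definition Dpow :: "nat \<Rightarrow> (int \<Rightarrow> complex) \<Rightarrow> (int \<Rightarrow> complex)" where
  "Dpow m u = (\<lambda>n. complex_of_real ((real_of_int n * pi) ^ (2 * m)) * u n)"

definition mulV :: "(int \<Rightarrow> complex) \<Rightarrow> (int \<Rightarrow> complex) \<Rightarrow> (int \<Rightarrow> complex)" where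
  "mulV V u = (\<lambda>n. \<Sum>\<^sub>\<infinity>j. V (n - j) * u j)"

definition Sdom :: "bool \<Rightarrow> nat \<Rightarrow> (int \<Rightarrow> complex) \<Rightarrow> (int \<Rightarrow> complex) set" where
  "Sdom p m V = {u \<in> Hs p (real m). (\<lambda>n. Dpow m u n + mulV V u n) \<in> Hs p 0}"

definition Sop :: "nat \<Rightarrow> (int \<Rightarrow> complex) \<Rightarrow> (int \<Rightarrow> complex) \<Rightarrow> (int \<Rightarrow> complex)" where
  "Sop m V u = (\<lambda>n. Dpow m u n + mulV V u n)"

definition is_resolvent ::
  "bool \<Rightarrow> nat \<Rightarrow> (int \<Rightarrow> complex) \<Rightarrow> complex \<Rightarrow> ((int \<Rightarrow> complex) \<Rightarrow> (int \<Rightarrow> complex)) \<Rightarrow> bool" where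
  "is_resolvent p m V lam R \<longleftrightarrow>
     (\<forall>f \<in> Hs p 0. R f \<in> Sdom p m V \<and> (\<lambda>n. Sop m V (R f) n - lam * R f n) = f) \<and>
     (\<forall>u \<in> Sdom p m V. R (\<lambda>n. Sop m V u n - lam * u n) = u) \<and>
     (\<exists>C. \<forall>f \<in> Hs p 0. l2norm (R f) \<le> C * l2norm f)"

definition resolvent_set :: "bool \<Rightarrow> nat \<Rightarrow> (int \<Rightarrow> complex) \<Rightarrow> complex set" where
  "resolvent_set p m V = {lam. \<exists>R. is_resolvent p m V lam R}"

definition compact_L2op :: "bool \<Rightarrow> ((int \<Rightarrow> complex) \<Rightarrow> (int \<Rightarrow> complex)) \<Rightarrow> bool" where
  "compact_L2op p T \<longleftrightarrow>
     (\<forall>(f :: nat \<Rightarrow> int \<Rightarrow> complex) B. (\<forall>k. f k \<in> Hs p 0 \<and> l2norm (f k) \<le> B) \<longrightarrow>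
        (\<exists>r g. strict_mono r \<and> g \<in> Hs p 0 \<and>
               (\<lambda>k. l2norm (\<lambda>n. T (f (r k)) n - g n)) \<longlonglongrightarrow> 0))"

end

theory Submission
  imports Defs "HOL-Library.Diagonal_Subsequence" "HOL-Library.Nat_Bijection"
begin


definition l2 :: "(int \<Rightarrow> complex) \<Rightarrow> bool" where
  "l2 h \<longleftrightarrow> (\<lambda>n. (cmod (h n))\<^sup>2) summable_on UNIV"

definition N2 :: "(int \<Rightarrow> complex) \<Rightarrow> real" where
  "N2 h = (\<Sum>\<^sub>\<infinity>n. (cmod (h n))\<^sup>2)"

lemma fin_bound_summable:
  fixes w :: "'a \<Rightarrow> real"
  assumes "\<And>n. w n \<ge> 0" "\<And>F. finite F \<Longrightarrow> sum w F \<le> B"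
  shows "w summable_on UNIV \<and> infsum w UNIV \<le> B"
proof -
  have s: "w summable_on UNIV"
    by (rule nonneg_bdd_above_summable_on) (use assms in \<open>auto simp: bdd_above_def\<close>)
  moreover have "infsum w UNIV \<le> B"
    by (rule infsum_le_finite_sums[OF s]) (use assms in auto)
  ultimately show ?thesis by auto
qed

lemma l2_fin_bound:
  assumes "\<And>F. finite F \<Longrightarrow> (\<Sum>n\<in>F. (cmod (h n))\<^sup>2) \<le> B"
  shows "l2 h \<and> N2 h \<le> B"
  using fin_bound_summable[of "\<lambda>n. (cmod (h n))\<^sup>2" B] assms unfolding l2_def N2_def by auto

lemma fin_le_infsum:
  fixes w :: "'a \<Rightarrow> real"
  assumes "w summable_on UNIV" "\<And>n. w n \<ge> 0" "finite F"
  shows "sum w F \<le> infsum w UNIV"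
  by (rule finite_sum_le_infsum) (use assms in auto)

lemma l2_fin_le: "l2 h \<Longrightarrow> finite F \<Longrightarrow> (\<Sum>n\<in>F. (cmod (h n))\<^sup>2) \<le> N2 h"
  unfolding l2_def N2_def by (rule fin_le_infsum) auto

lemma N2_nonneg: "N2 h \<ge> 0"
  unfolding N2_def by (rule infsum_nonneg) auto

lemma l2_coord: "l2 h \<Longrightarrow> (cmod (h n))\<^sup>2 \<le> N2 h"
  using l2_fin_le[of h "{n}"] by simp

lemma l2_coord': "l2 h \<Longrightarrow> cmod (h n) \<le> sqrt (N2 h)"
  using l2_coord[of h n] real_le_rsqrt by blast

lemma l2_L2_set: "l2 h \<Longrightarrow> finite F \<Longrightarrow> L2_set (\<lambda>n. cmod (h n)) F \<le> sqrt (N2 h)"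
  unfolding L2_set_def using l2_fin_le[of h F] by simp

lemma CS_infsum:
  assumes "l2 x" "l2 y"
  shows "(\<lambda>j. x j * y j) summable_on UNIV \<and>
         cmod (\<Sum>\<^sub>\<infinity>j. x j * y j) \<le> sqrt (N2 x) * sqrt (N2 y)"
proof -
  have fb: "sum (\<lambda>j. norm (x j * y j)) F \<le> sqrt (N2 x) * sqrt (N2 y)" if "finite F" for F
  proof -
    have "sum (\<lambda>j. norm (x j * y j)) F = (\<Sum>j\<in>F. \<bar>cmod (x j)\<bar> * \<bar>cmod (y j)\<bar>)"
      by (simp add: norm_mult)
    also have "\<dots> \<le> L2_set (\<lambda>n. cmod (x n)) F * L2_set (\<lambda>n. cmod (y n)) F"
      by (rule L2_set_mult_ineq)
    also have "\<dots> \<le> sqrt (N2 x) * sqrt (N2 y)"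
      by (intro mult_mono l2_L2_set assms that) (auto simp: N2_nonneg)
    finally show ?thesis .
  qed
  from fin_bound_summable[of "\<lambda>j. norm (x j * y j)", OF _ fb]
  have ab: "(\<lambda>j. norm (x j * y j)) summable_on UNIV"
    and ib: "(\<Sum>\<^sub>\<infinity>j. norm (x j * y j)) \<le> sqrt (N2 x) * sqrt (N2 y)" by auto
  have "cmod (\<Sum>\<^sub>\<infinity>j. x j * y j) \<le> (\<Sum>\<^sub>\<infinity>j. norm (x j * y j))"
    by (rule norm_infsum_bound[OF ab])
  with ib abs_summable_summable[OF ab] show ?thesis by auto
qed

lemma infsum_finsum:
  fixes f :: "'b \<Rightarrow> 'a \<Rightarrow> 'c::{topological_comm_monoid_add, t2_space}"
  assumes "finite F" "\<And>i. i \<in> F \<Longrightarrow> f i summable_on A"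
  shows "(\<lambda>x. \<Sum>i\<in>F. f i x) summable_on A \<and> (\<Sum>\<^sub>\<infinity>x\<in>A. \<Sum>i\<in>F. f i x) = (\<Sum>i\<in>F. \<Sum>\<^sub>\<infinity>x\<in>A. f i x)"
  using assms
proof (induction F rule: finite_induct)
  case empty then show ?case by simp
next
  case (insert a F)
  then have IH: "(\<lambda>x. \<Sum>i\<in>F. f i x) summable_on A"
     "(\<Sum>\<^sub>\<infinity>x\<in>A. \<Sum>i\<in>F. f i x) = (\<Sum>i\<in>F. \<Sum>\<^sub>\<infinity>x\<in>A. f i x)" by auto
  have fa: "f a summable_on A" using insert by auto
  show ?case using insert(1,2) IH
    by (simp add: summable_on_add[OF fa IH(1)] infsum_add[OF fa IH(1)])
qed

lemma infsum_diff:
  fixes f g :: "'a \<Rightarrow> 'b::{topological_ab_group_add, t2_space}"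
  assumes "f summable_on A" "g summable_on A"
  shows "(\<lambda>x. f x - g x) summable_on A \<and> infsum (\<lambda>x. f x - g x) A = infsum f A - infsum g A"
proof -
  have g': "(\<lambda>x. - g x) summable_on A" using summable_on_uminus assms(2) by blast
  show ?thesis
    using summable_on_add[OF assms(1) g'] infsum_add[OF assms(1) g'] infsum_uminus[of g A]
    by simp
qed



definition Mop :: "(int \<Rightarrow> int \<Rightarrow> complex) \<Rightarrow> (int \<Rightarrow> complex) \<Rightarrow> int \<Rightarrow> complex" where
  "Mop M h = (\<lambda>n. \<Sum>\<^sub>\<infinity>j. M n j * h j)"

definition HSb :: "(int \<Rightarrow> int \<Rightarrow> complex) \<Rightarrow> real \<Rightarrow> bool" where
  "HSb M H \<longleftrightarrow> (\<forall>F G. finite F \<longrightarrow> finite G \<longrightarrow> (\<Sum>n\<in>F. \<Sum>j\<in>G. (cmod (M n j))\<^sup>2) \<le> H)"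

lemma HS_row: "HSb M H \<Longrightarrow> l2 (M n) \<and> N2 (M n) \<le> H"
  unfolding HSb_def by (intro l2_fin_bound) (drule spec[of _ "{n}"], auto)

lemma HS_rowsum:
  assumes "HSb M H" "finite F"
  shows "(\<Sum>n\<in>F. N2 (M n)) \<le> H"
proof -
  have rows: "\<And>n. (\<lambda>j. (cmod (M n j))\<^sup>2) summable_on UNIV"
    using HS_row[OF assms(1)] unfolding l2_def by blast
  have e: "(\<lambda>j. \<Sum>n\<in>F. (cmod (M n j))\<^sup>2) summable_on UNIV \<and>
     (\<Sum>\<^sub>\<infinity>j. \<Sum>n\<in>F. (cmod (M n j))\<^sup>2) = (\<Sum>n\<in>F. \<Sum>\<^sub>\<infinity>j. (cmod (M n j))\<^sup>2)"
    by (rule infsum_finsum[OF assms(2)]) (use rows in auto)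
  have "(\<Sum>\<^sub>\<infinity>j. \<Sum>n\<in>F. (cmod (M n j))\<^sup>2) \<le> H"
  proof (rule infsum_le_finite_sums)
    show "(\<lambda>j. \<Sum>n\<in>F. (cmod (M n j))\<^sup>2) summable_on UNIV" using e by blast
    fix G :: "int set" assume "finite G"
    have "(\<Sum>j\<in>G. \<Sum>n\<in>F. (cmod (M n j))\<^sup>2) = (\<Sum>n\<in>F. \<Sum>j\<in>G. (cmod (M n j))\<^sup>2)"
      by (rule sum.swap)
    also have "\<dots> \<le> H" using assms \<open>finite G\<close> unfolding HSb_def by blast
    finally show "(\<Sum>j\<in>G. \<Sum>n\<in>F. (cmod (M n j))\<^sup>2) \<le> H" .
  qed
  with e show ?thesis unfolding N2_def by simp
qed

lemma HS_apply:
  assumes "HSb M H" "l2 h"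
  shows "(\<lambda>j. M n j * h j) summable_on UNIV \<and> cmod (Mop M h n) \<le> sqrt (N2 (M n)) * sqrt (N2 h)"
  using CS_infsum[OF conjunct1[OF HS_row[OF assms(1)]] assms(2), of n] unfolding Mop_def by auto

lemma HS_bound:
  assumes "HSb M H" "l2 h"
  shows "l2 (Mop M h) \<and> N2 (Mop M h) \<le> H * N2 h"
proof (rule l2_fin_bound)
  fix F :: "int set" assume F: "finite F"
  have "(\<Sum>n\<in>F. (cmod (Mop M h n))\<^sup>2) \<le> (\<Sum>n\<in>F. N2 (M n) * N2 h)"
  proof (rule sum_mono)
    fix n
    have "cmod (Mop M h n) \<le> sqrt (N2 (M n)) * sqrt (N2 h)" using HS_apply[OF assms] by blast
    then have "(cmod (Mop M h n))\<^sup>2 \<le> (sqrt (N2 (M n)) * sqrt (N2 h))\<^sup>2"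
      by (intro power_mono) auto
    also have "\<dots> = N2 (M n) * N2 h" by (simp add: power_mult_distrib N2_nonneg)
    finally show "(cmod (Mop M h n))\<^sup>2 \<le> N2 (M n) * N2 h" .
  qed
  also have "\<dots> = (\<Sum>n\<in>F. N2 (M n)) * N2 h" by (simp add: sum_distrib_right)
  also have "\<dots> \<le> H * N2 h" by (intro mult_right_mono HS_rowsum assms F N2_nonneg)
  finally show "(\<Sum>n\<in>F. (cmod (Mop M h n))\<^sup>2) \<le> H * N2 h" .
qed

lemma HS_coord:
  assumes "HSb M H" "l2 h"
  shows "cmod (Mop M h n) \<le> sqrt H * sqrt (N2 h)"
proof -
  have "cmod (Mop M h n) \<le> sqrt (N2 (M n)) * sqrt (N2 h)" using HS_apply[OF assms] by blast
  also have "\<dots> \<le> sqrt H * sqrt (N2 h)"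
    using HS_row[OF assms(1), of n] by (intro mult_right_mono) (auto simp: N2_nonneg)
  finally show ?thesis .
qed

lemma l2_lin:
  assumes "l2 h" "l2 g"
  shows "l2 (\<lambda>j. h j + c * g j)"
proof -
  have s: "(\<lambda>j. 2 * (cmod (h j))\<^sup>2 + 2 * (cmod c)\<^sup>2 * (cmod (g j))\<^sup>2) summable_on UNIV"
    using assms unfolding l2_def
    by (intro summable_on_add summable_on_cmult_right) auto
  have le: "(cmod (h j + c * g j))\<^sup>2 \<le> 2 * (cmod (h j))\<^sup>2 + 2 * (cmod c)\<^sup>2 * (cmod (g j))\<^sup>2" for j
  proof -
    have "cmod (h j + c * g j) \<le> cmod (h j) + cmod c * cmod (g j)"
      by (metis norm_mult norm_triangle_ineq)
    then have "(cmod (h j + c * g j))\<^sup>2 \<le> (cmod (h j) + cmod c * cmod (g j))\<^sup>2"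
      by (intro power_mono) auto
    also have "\<dots> \<le> 2 * (cmod (h j))\<^sup>2 + 2 * (cmod c * cmod (g j))\<^sup>2"
      by (smt (verit) sum_squares_bound power2_sum zero_le_power2 power2_diff)
    finally show ?thesis by (simp add: power_mult_distrib)
  qed
  show ?thesis unfolding l2_def
    by (rule summable_on_comparison_test[OF s]) (use le in auto)
qed

lemma l2_add: "l2 h \<Longrightarrow> l2 g \<Longrightarrow> l2 (\<lambda>j. h j + g j)"
  using l2_lin[of h g 1] by simp

lemma l2_diff: "l2 h \<Longrightarrow> l2 g \<Longrightarrow> l2 (\<lambda>j. h j - g j)"
  using l2_lin[of h g "-1"] by simp

lemma l2_scale: "l2 g \<Longrightarrow> l2 (\<lambda>j. c * g j)"
  using l2_lin[of "\<lambda>_. 0" g c] by (simp add: l2_def)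

lemma l2_zero: "l2 (\<lambda>_. 0)" by (simp add: l2_def)

lemma Mop_lin:
  assumes "HSb M H" "l2 h" "l2 g"
  shows "Mop M (\<lambda>j. h j + c * g j) n = Mop M h n + c * Mop M g n"
proof -
  have sh: "(\<lambda>j. M n j * h j) summable_on UNIV" using HS_apply[OF assms(1,2)] by blast
  have sg: "(\<lambda>j. c * (M n j * g j)) summable_on UNIV"
    using HS_apply[OF assms(1,3)] by (intro summable_on_cmult_right) blast
  have "Mop M (\<lambda>j. h j + c * g j) n = (\<Sum>\<^sub>\<infinity>j. M n j * h j + c * (M n j * g j))"
    unfolding Mop_def by (simp add: algebra_simps)
  also have "\<dots> = Mop M h n + (\<Sum>\<^sub>\<infinity>j. c * (M n j * g j))"
    unfolding Mop_def by (rule infsum_add[OF sh sg])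
  also have "(\<Sum>\<^sub>\<infinity>j. c * (M n j * g j)) = c * Mop M g n"
    unfolding Mop_def by (rule infsum_cmult_right) (use HS_apply[OF assms(1,3)] in blast)
  finally show ?thesis .
qed

lemma Mop_diff:
  assumes "HSb M H" "l2 h" "l2 g"
  shows "Mop M (\<lambda>j. h j - g j) n = Mop M h n - Mop M g n"
  using Mop_lin[OF assms, of "-1" n] by simp

lemma Mop_supp:
  assumes "\<And>n j. n \<notin> S \<Longrightarrow> j \<in> S \<Longrightarrow> M n j = 0" "\<And>j. j \<notin> S \<Longrightarrow> h j = 0" "n \<notin> S"
  shows "Mop M h n = 0"
proof -
  have "(\<lambda>j. M n j * h j) = (\<lambda>_. 0)" using assms by (metis mult_eq_0_iff)
  then show ?thesis unfolding Mop_def by simp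
qed



definition Kp :: "(int \<Rightarrow> int \<Rightarrow> complex) \<Rightarrow> nat \<Rightarrow> (int \<Rightarrow> complex) \<Rightarrow> int \<Rightarrow> complex" where
  "Kp M k g = ((Mop M) ^^ k) g"

lemma Kp_0[simp]: "Kp M 0 g = g" by (simp add: Kp_def)
lemma Kp_Suc: "Kp M (Suc k) g = Mop M (Kp M k g)" by (simp add: Kp_def)

definition Neu :: "(int \<Rightarrow> int \<Rightarrow> complex) \<Rightarrow> (int \<Rightarrow> complex) \<Rightarrow> int \<Rightarrow> complex" where
  "Neu M g = (\<lambda>n. \<Sum>k. (-1)^k * Kp M k g n)"

definition psum :: "(int \<Rightarrow> int \<Rightarrow> complex) \<Rightarrow> (int \<Rightarrow> complex) \<Rightarrow> nat \<Rightarrow> int \<Rightarrow> complex" where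
  "psum M g N = (\<lambda>n. \<Sum>k<N. (-1)^k * Kp M k g n)"

context
  fixes M :: "int \<Rightarrow> int \<Rightarrow> complex" and g :: "int \<Rightarrow> complex"
  assumes HS: "HSb M (1/4)" and g: "l2 g"
begin

lemma Kp_l2: "l2 (Kp M k g) \<and> N2 (Kp M k g) \<le> (1/4)^k * N2 g"
proof (induction k)
  case 0 then show ?case using g by simp
next
  case (Suc k)
  then have "l2 (Kp M (Suc k) g) \<and> N2 (Kp M (Suc k) g) \<le> 1/4 * N2 (Kp M k g)"
    using HS_bound[OF HS] by (simp add: Kp_Suc)
  with Suc show ?case by auto
qed

lemma Kp_norm: "sqrt (N2 (Kp M k g)) \<le> (1/2)^k * sqrt (N2 g)"
proof -
  have "sqrt (N2 (Kp M k g)) \<le> sqrt ((1/4)^k * N2 g)" using Kp_l2 by auto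
  also have "\<dots> = (1/2)^k * sqrt (N2 g)"
    by (simp add: real_sqrt_mult real_sqrt_power real_sqrt_divide)
  finally show ?thesis .
qed

lemma Kp_coord: "cmod (Kp M k g n) \<le> (1/2)^k * sqrt (N2 g)"
  using l2_coord'[of "Kp M k g" n] Kp_l2[of k] Kp_norm[of k] by linarith

lemma Neu_summable: "summable (\<lambda>k. (-1)^k * Kp M k g n)"
proof (rule summable_comparison_test[where g = "\<lambda>k. (1/2)^k * sqrt (N2 g)"])
  show "\<exists>N. \<forall>k\<ge>N. norm ((-1)^k * Kp M k g n) \<le> (1/2)^k * sqrt (N2 g)"
    using Kp_coord by (simp add: norm_mult norm_power)
  show "summable (\<lambda>k. (1/2::real)^k * sqrt (N2 g))"
    by (intro summable_mult2 summable_geometric) auto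
qed

lemma L2_set_sum:
  fixes x :: "nat \<Rightarrow> int \<Rightarrow> complex"
  shows "L2_set (\<lambda>n. cmod (\<Sum>k\<in>K. x k n)) F \<le> (\<Sum>k\<in>K. L2_set (\<lambda>n. cmod (x k n)) F)"
proof (induction K rule: infinite_finite_induct)
  case (infinite A) then show ?case by (simp add: L2_set_def)
next
  case empty then show ?case by (simp add: L2_set_def)
next
  case (insert a A)
  have "L2_set (\<lambda>n. cmod (\<Sum>k\<in>insert a A. x k n)) F
        = L2_set (\<lambda>n. cmod (x a n + (\<Sum>k\<in>A. x k n))) F" using insert by simp
  also have "\<dots> \<le> L2_set (\<lambda>n. cmod (x a n) + cmod (\<Sum>k\<in>A. x k n)) F"
    by (rule L2_set_mono) (auto intro: norm_triangle_ineq)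
  also have "\<dots> \<le> L2_set (\<lambda>n. cmod (x a n)) F + L2_set (\<lambda>n. cmod (\<Sum>k\<in>A. x k n)) F"
    by (rule L2_set_triangle_ineq)
  also have "\<dots> \<le> L2_set (\<lambda>n. cmod (x a n)) F + (\<Sum>k\<in>A. L2_set (\<lambda>n. cmod (x k n)) F)"
    using insert by simp
  finally show ?case using insert by simp
qed

lemma geo_sum: "N \<le> P \<Longrightarrow> (\<Sum>k\<in>{N..<P}. (1/2::real)^k) = 2 * ((1/2)^N - (1/2)^P)"
proof (induction P)
  case 0 then show ?case by simp
next
  case (Suc P)
  show ?case
  proof (cases "N = Suc P")
    case True then show ?thesis by simp
  next
    case False
    then have "N \<le> P" using Suc by auto
    then show ?thesis using Suc by (simp add: atLeastLessThanSuc)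
  qed
qed

lemma tail_L2:
  assumes F: "finite F"
  shows "L2_set (\<lambda>n. cmod (Neu M g n - psum M g N n)) F \<le> 2 * (1/2)^N * sqrt (N2 g)"
proof -
  let ?G = "sqrt (N2 g)"
  let ?x = "\<lambda>k n. (-1)^k * Kp M k g n"
  have lim: "(\<lambda>P. L2_set (\<lambda>n. cmod ((\<Sum>k<P. ?x k n) - psum M g N n)) F)
      \<longlonglongrightarrow> L2_set (\<lambda>n. cmod (Neu M g n - psum M g N n)) F"
  proof -
    have "\<And>n. (\<lambda>P. \<Sum>k<P. ?x k n) \<longlonglongrightarrow> Neu M g n"
      unfolding Neu_def by (rule summable_LIMSEQ[OF Neu_summable])
    then show ?thesis unfolding L2_set_def
      by (intro tendsto_intros)
  qed
  have bd: "L2_set (\<lambda>n. cmod ((\<Sum>k<P. ?x k n) - psum M g N n)) F \<le> 2 * (1/2)^N * ?G"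
    if "P \<ge> N" for P
  proof -
    have eq: "(\<Sum>k<P. ?x k n) - psum M g N n = (\<Sum>k\<in>{N..<P}. ?x k n)" for n
    proof -
      have "{..<P} = {..<N} \<union> {N..<P}" using that by auto
      then have "(\<Sum>k<P. ?x k n) = (\<Sum>k<N. ?x k n) + (\<Sum>k\<in>{N..<P}. ?x k n)"
        by (simp add: sum.union_disjoint ivl_disj_int(2))
      then show ?thesis unfolding psum_def by simp
    qed
    have "L2_set (\<lambda>n. cmod ((\<Sum>k<P. ?x k n) - psum M g N n)) F
        = L2_set (\<lambda>n. cmod (\<Sum>k\<in>{N..<P}. ?x k n)) F" by (simp add: eq)
    also have "\<dots> \<le> (\<Sum>k\<in>{N..<P}. L2_set (\<lambda>n. cmod (?x k n)) F)" by (rule L2_set_sum)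
    also have "\<dots> \<le> (\<Sum>k\<in>{N..<P}. (1/2)^k * ?G)"
    proof (rule sum_mono)
      fix k
      have "L2_set (\<lambda>n. cmod (?x k n)) F = L2_set (\<lambda>n. cmod (Kp M k g n)) F"
        by (simp add: norm_mult norm_power)
      also have "\<dots> \<le> sqrt (N2 (Kp M k g))" using l2_L2_set Kp_l2 F by blast
      also have "\<dots> \<le> (1/2)^k * ?G" by (rule Kp_norm)
      finally show "L2_set (\<lambda>n. cmod (?x k n)) F \<le> (1/2)^k * ?G" .
    qed
    also have "\<dots> = 2 * ((1/2)^N - (1/2)^P) * ?G"
      by (simp add: sum_distrib_right[symmetric] geo_sum[OF that])
    also have "\<dots> \<le> 2 * (1/2)^N * ?G" by (intro mult_right_mono) (auto simp: N2_nonneg)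
    finally show ?thesis .
  qed
  show ?thesis
    by (rule LIMSEQ_le_const2[OF lim]) (use bd in auto)
qed

lemma tail_l2: "l2 (\<lambda>n. Neu M g n - psum M g N n) \<and>
    N2 (\<lambda>n. Neu M g n - psum M g N n) \<le> (2 * (1/2)^N * sqrt (N2 g))\<^sup>2"
proof (rule l2_fin_bound)
  fix F :: "int set" assume F: "finite F"
  have "(\<Sum>n\<in>F. (cmod (Neu M g n - psum M g N n))\<^sup>2)
      = (L2_set (\<lambda>n. cmod (Neu M g n - psum M g N n)) F)\<^sup>2"
    unfolding L2_set_def by (simp add: sum_nonneg)
  also have "\<dots> \<le> (2 * (1/2)^N * sqrt (N2 g))\<^sup>2"
    by (intro power_mono tail_L2 F) simp
  finally show "(\<Sum>n\<in>F. (cmod (Neu M g n - psum M g N n))\<^sup>2) \<le> (2 * (1/2)^N * sqrt (N2 g))\<^sup>2" .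
qed

lemma Neu_l2: "l2 (Neu M g) \<and> N2 (Neu M g) \<le> 4 * N2 g"
  using tail_l2[of 0] by (simp add: psum_def power_mult_distrib N2_nonneg)

lemma psum_l2: "l2 (psum M g N)"
proof (induction N)
  case 0 then show ?case by (simp add: psum_def l2_zero)
next
  case (Suc N)
  have "psum M g (Suc N) = (\<lambda>n. psum M g N n + (-1)^N * Kp M N g n)"
    by (simp add: psum_def)
  then show ?case using l2_lin[OF Suc Kp_l2[THEN conjunct1]] by simp
qed

lemma psum_eq: "psum M g N n + Mop M (psum M g N) n = g n - (-1)^N * Kp M N g n"
proof (induction N)
  case 0 then show ?case by (simp add: psum_def Mop_def)
next
  case (Suc N)
  have e: "psum M g (Suc N) = (\<lambda>n. psum M g N n + (-1)^N * Kp M N g n)"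
    by (simp add: psum_def)
  have "Mop M (psum M g (Suc N)) n = Mop M (psum M g N) n + (-1)^N * Kp M (Suc N) g n"
    unfolding e Kp_Suc by (rule Mop_lin[OF HS psum_l2 Kp_l2[THEN conjunct1]])
  then show ?case using Suc by (simp add: e algebra_simps)
qed

lemma Neu_eq: "Neu M g n + Mop M (Neu M g) n = g n"
proof -
  let ?G = "sqrt (N2 g)"
  have t1: "(\<lambda>N. psum M g N n) \<longlonglongrightarrow> Neu M g n"
    unfolding psum_def Neu_def by (rule summable_LIMSEQ[OF Neu_summable])
  have t2: "(\<lambda>N. Mop M (psum M g N) n) \<longlonglongrightarrow> Mop M (Neu M g) n"
  proof -
    have bd: "cmod (Mop M (psum M g N) n - Mop M (Neu M g) n) \<le> (1/2)^N * ?G" for N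
    proof -
      have "cmod (Mop M (psum M g N) n - Mop M (Neu M g) n)
          = cmod (Mop M (\<lambda>j. Neu M g j - psum M g N j) n)"
        using Mop_diff[OF HS Neu_l2[THEN conjunct1] psum_l2, of N n] by (simp add: norm_minus_commute)
      also have "\<dots> \<le> sqrt (1/4) * sqrt (N2 (\<lambda>j. Neu M g j - psum M g N j))"
        by (rule HS_coord[OF HS tail_l2[THEN conjunct1]])
      also have "\<dots> \<le> sqrt (1/4) * sqrt ((2 * (1/2)^N * ?G)\<^sup>2)"
        using tail_l2[of N] by (intro mult_left_mono real_sqrt_le_mono) auto
      also have "\<dots> = (1/2)^N * ?G" by (simp add: real_sqrt_divide N2_nonneg)
      finally show ?thesis .
    qed
    have z: "(\<lambda>N. (1/2::real)^N * ?G) \<longlonglongrightarrow> 0"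
      by (intro tendsto_mult_left_zero LIMSEQ_power_zero) auto
    have "(\<lambda>N. Mop M (psum M g N) n - Mop M (Neu M g) n) \<longlonglongrightarrow> 0"
      by (rule Lim_null_comparison[OF _ z]) (use bd in auto)
    from tendsto_add[OF this tendsto_const[of "Mop M (Neu M g) n"]] show ?thesis by simp
  qed
  have t3: "(\<lambda>N. g n - (-1)^N * Kp M N g n) \<longlonglongrightarrow> g n"
  proof -
    have z: "(\<lambda>N. (1/2::real)^N * ?G) \<longlonglongrightarrow> 0"
      by (intro tendsto_mult_left_zero LIMSEQ_power_zero) auto
    have "(\<lambda>N. (-1)^N * Kp M N g n) \<longlonglongrightarrow> 0"
      by (rule Lim_null_comparison[OF _ z]) (use Kp_coord in \<open>auto simp: norm_mult norm_power\<close>)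
    then show ?thesis using tendsto_diff[OF tendsto_const] by fastforce
  qed
  have "(\<lambda>N. psum M g N n + Mop M (psum M g N) n) \<longlonglongrightarrow> Neu M g n + Mop M (Neu M g) n"
    by (intro tendsto_add t1 t2)
  then have "(\<lambda>N. g n - (-1)^N * Kp M N g n) \<longlonglongrightarrow> Neu M g n + Mop M (Neu M g) n"
    by (simp add: psum_eq)
  from LIMSEQ_unique[OF this t3] show ?thesis .
qed

lemma Neu_supp:
  assumes "\<And>n j. n \<notin> S \<Longrightarrow> j \<in> S \<Longrightarrow> M n j = 0" "\<And>j. j \<notin> S \<Longrightarrow> g j = 0" "n \<notin> S"
  shows "Neu M g n = 0"
proof -
  have "\<And>k. \<forall>j. j \<notin> S \<longrightarrow> Kp M k g j = 0"
  proof -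
    fix k show "\<forall>j. j \<notin> S \<longrightarrow> Kp M k g j = 0"
    proof (induction k)
      case 0 then show ?case using assms(2) by simp
    next
      case (Suc k) then show ?case
        using Mop_supp[of S M "Kp M k g"] assms(1) by (simp add: Kp_Suc)
    qed
  qed
  then show ?thesis unfolding Neu_def using assms(3) by simp
qed

end


definition aa :: "nat \<Rightarrow> real \<Rightarrow> int \<Rightarrow> real" where
  "aa m s n = (real_of_int n * pi)^(2*m) + s\<^sup>2"

definition bb :: "nat \<Rightarrow> int \<Rightarrow> real" where
  "bb m n = bracket n ^ (2*m)"

definition KK :: "nat \<Rightarrow> real \<Rightarrow> (int \<Rightarrow> complex) \<Rightarrow> int \<Rightarrow> int \<Rightarrow> complex" where
  "KK m s V n j = V (n - j) / complex_of_real (sqrt (aa m s n) * sqrt (aa m s j))"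

definition WV :: "nat \<Rightarrow> (int \<Rightarrow> complex) \<Rightarrow> int \<Rightarrow> real" where
  "WV m V k = (cmod (V k))\<^sup>2 / bb m k"

definition VN :: "nat \<Rightarrow> (int \<Rightarrow> complex) \<Rightarrow> real" where
  "VN m V = (\<Sum>\<^sub>\<infinity>k. WV m V k)"

lemma bracket_ge1: "bracket n \<ge> 1" by (simp add: bracket_def)

lemma bb_ge1: "bb m n \<ge> 1" unfolding bb_def using bracket_ge1 by simp

lemma bb_pos: "bb m n > 0" using bb_ge1[of m n] by linarith

lemma even_pow_nonneg: "(x::real)^(2*m) \<ge> 0"
  by (simp add: power_mult)

lemma even_pow_abs: "(x::real)^(2*m) = \<bar>x\<bar>^(2*m)"
  by (simp add: power_mult)

lemma aa_pos: "s \<ge> 1 \<Longrightarrow> aa m s n > 0"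
  unfolding aa_def using even_pow_nonneg[of "real_of_int n * pi" m]
  by (smt (verit) one_le_power)

lemma aa_ge:
  assumes "m \<ge> 1"
  shows "(real_of_int n)\<^sup>2 + s\<^sup>2 \<le> aa m s n"
proof (cases "n = 0")
  case True then show ?thesis by (simp add: aa_def)
next
  case False
  have a1: "1 \<le> \<bar>real_of_int n\<bar>" using False by linarith
  then have n1: "1 \<le> (real_of_int n)\<^sup>2"
    by (metis abs_ge_self dual_order.trans one_le_power power2_abs)
  have p1: "1 \<le> pi\<^sup>2" using pi_ge_two by (simp add: one_le_power)
  have "(real_of_int n)\<^sup>2 * 1 \<le> (real_of_int n)\<^sup>2 * pi\<^sup>2"
    using p1 by (intro mult_left_mono) auto
  then have le1: "(real_of_int n)\<^sup>2 \<le> (real_of_int n * pi)\<^sup>2" by (simp add: power_mult_distrib)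
  have "(real_of_int n * pi)\<^sup>2 ^ 1 \<le> ((real_of_int n * pi)\<^sup>2)^m"
    using assms n1 le1 by (intro power_increasing) auto
  with le1 have "(real_of_int n)\<^sup>2 \<le> ((real_of_int n * pi)\<^sup>2)^m" by simp
  also have "\<dots> = (real_of_int n * pi)^(2*m)" by (simp add: power_mult)
  finally show ?thesis by (simp add: aa_def)
qed

lemma bb_le_aa:
  assumes "s \<ge> 1"
  shows "bb m n \<le> 4^m * aa m s n"
proof -
  let ?x = "\<bar>real_of_int n\<bar>"
  have bbx: "bb m n = (1 + ?x)^(2*m)" by (simp add: bb_def bracket_def)
  have aax: "aa m s n = (?x * pi)^(2*m) + s\<^sup>2"
    unfolding aa_def by (subst even_pow_abs) (simp add: abs_mult)
  have s2: "s\<^sup>2 \<ge> 1" using assms by (simp add: one_le_power)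
  have p4: "(2::real)^(2*m) = 4^m" by (simp add: power_mult)
  show ?thesis
  proof (cases "?x \<le> 1")
    case True
    have "(1 + ?x)^(2*m) \<le> 2^(2*m)" using True by (intro power_mono) auto
    also have "\<dots> = 4^m * 1" using p4 by simp
    also have "\<dots> \<le> 4^m * aa m s n"
    proof -
      have "0 \<le> (?x*pi)^(2*m)" by simp
      then have "1 \<le> aa m s n" using s2 aax by linarith
      then show ?thesis by simp
    qed
    finally show ?thesis using bbx by simp
  next
    case False
    have "(1 + ?x)^(2*m) \<le> (2 * ?x)^(2*m)" using False by (intro power_mono) auto
    also have "\<dots> = 4^m * ?x^(2*m)" using p4 by (simp add: power_mult_distrib)
    also have "\<dots> \<le> 4^m * (?x * pi)^(2*m)"
    proof -
      have "?x \<le> ?x * pi" using pi_ge_two by (simp add: mult_le_cancel_left1) 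
      then show ?thesis by (intro mult_left_mono power_mono) auto
    qed
    also have "\<dots> \<le> 4^m * aa m s n" by (simp add: aax)
    finally show ?thesis using bbx by simp
  qed
qed

lemma bb_diff: "bb m (n - j) \<le> 4^m * (bb m n + bb m j)"
proof -
  let ?M = "max (bracket n) (bracket j)"
  have "bracket (n - j) \<le> 2 * ?M" unfolding bracket_def max_def by (auto split: if_splits simp: abs_if)
  then have "bb m (n - j) \<le> (2 * ?M)^(2*m)"
    unfolding bb_def by (intro power_mono) (auto simp: bracket_def)
  also have "\<dots> = 4^m * ?M^(2*m)" by (simp add: power_mult_distrib power_mult)
  also have "?M^(2*m) \<le> bb m n + bb m j"
    unfolding bb_def using bracket_ge1[of n] bracket_ge1[of j]
    by (cases "bracket n \<le> bracket j") (auto simp: max_def)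
  finally show ?thesis by simp
qed

lemma telesc:
  assumes "s \<ge> 1"
  shows "(\<Sum>i=1..K. 1 / ((real i)\<^sup>2 + s\<^sup>2)) \<le> 2 * (1/s - 1/(real K + s))"
proof (induction K)
  case 0 then show ?case by simp
next
  case (Suc K)
  have step: "1 / ((real (Suc K))\<^sup>2 + s\<^sup>2) \<le> 2 * (1/(real K + s) - 1/(real K + 1 + s))"
  proof -
    have pos1: "real K + s > 0" "real K + 1 + s > 0" using assms by auto
    have e: "2 * (1/(real K + s) - 1/(real K + 1 + s)) = 2 / ((real K + s) * (real K + 1 + s))"
      using pos1 by (simp add: field_simps)
    have "(real K + s) * (real K + 1 + s) \<le> (real K + 1 + s) * (real K + 1 + s)"
      using pos1 by (intro mult_right_mono) auto
    also have "\<dots> \<le> 2 * ((real (Suc K))\<^sup>2 + s\<^sup>2)"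
    proof -
      have "0 \<le> (real K + 1 - s)\<^sup>2" by simp
      then show ?thesis by (simp add: power2_eq_square algebra_simps)
    qed
    finally have le: "(real K + s) * (real K + 1 + s) \<le> 2 * ((real (Suc K))\<^sup>2 + s\<^sup>2)" .
    have pa: "(real (Suc K))\<^sup>2 + s\<^sup>2 > 0" using assms by (simp add: add_pos_nonneg)
    have pb: "(real K + s) * (real K + 1 + s) > 0" using pos1 by simp
    have "1 / ((real (Suc K))\<^sup>2 + s\<^sup>2) \<le> 2 / ((real K + s) * (real K + 1 + s))"
      using le pa pb by (simp add: field_simps)
    then show ?thesis using e by simp
  qed
  have "real (Suc K) = real K + 1" by simp
  then show ?case using Suc step by (simp only: sum.atLeast_Suc_atMost_Suc_shift) (simp add: add_ac)
qed


lemma aa_ge_pos: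
  assumes "m \<ge> 1" "s \<ge> 1"
  shows "1 / aa m s j \<le> 1 / ((real_of_int j)\<^sup>2 + s\<^sup>2)"
proof -
  have "(real_of_int j)\<^sup>2 + s\<^sup>2 > 0" using assms by (simp add: add_nonneg_pos)
  then show ?thesis using aa_ge[OF assms(1), of j s] by (intro divide_left_mono) auto
qed

lemma pos_part:
  assumes "s \<ge> 1" "finite P" "P \<subseteq> {0<..}"
  shows "(\<Sum>j\<in>P. 1 / ((real_of_int j)\<^sup>2 + s\<^sup>2)) \<le> 2 / s"
proof -
  define K where "K = nat (Max (insert 0 P))"
  have sub: "P \<subseteq> int ` {1..K}"
  proof
    fix x assume x: "x \<in> P"
    then have "x \<le> Max (insert 0 P)" using assms(2) by simp
    moreover have "x > 0" using x assms(3) by auto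
    ultimately have "nat x \<in> {1..K}" unfolding K_def by auto
    moreover have "x = int (nat x)" using \<open>x > 0\<close> by simp
    ultimately show "x \<in> int ` {1..K}" by blast
  qed
  have "(\<Sum>j\<in>P. 1 / ((real_of_int j)\<^sup>2 + s\<^sup>2)) \<le> (\<Sum>j\<in>int ` {1..K}. 1 / ((real_of_int j)\<^sup>2 + s\<^sup>2))"
    by (rule sum_mono2[OF _ sub]) (auto simp: add_nonneg_nonneg)
  also have "\<dots> = (\<Sum>i=1..K. 1 / ((real i)\<^sup>2 + s\<^sup>2))"
    by (subst sum.reindex) auto
  also have "\<dots> \<le> 2 * (1/s - 1/(real K + s))" by (rule telesc[OF assms(1)])
  also have "\<dots> \<le> 2 / s" using assms(1) by simp
  finally show ?thesis .
qed

lemma Tsum: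
  assumes "m \<ge> 1" "s \<ge> 1" "finite F"
  shows "(\<Sum>j\<in>F. 1 / aa m s j) \<le> 5 / s"
proof -
  let ?f = "\<lambda>j::int. 1 / ((real_of_int j)\<^sup>2 + s\<^sup>2)"
  have fnn: "\<And>j. ?f j \<ge> 0" by (simp add: add_nonneg_nonneg)
  have "(\<Sum>j\<in>F. 1 / aa m s j) \<le> (\<Sum>j\<in>F. ?f j)"
    by (rule sum_mono) (rule aa_ge_pos[OF assms(1,2)])
  also have "(\<Sum>j\<in>F. ?f j) = (\<Sum>j\<in>F \<inter> {0<..}. ?f j) + (\<Sum>j\<in>F - {0<..}. ?f j)"
    by (rule sum.Int_Diff[OF assms(3)])
  also have "(\<Sum>j\<in>F - {0<..}. ?f j) = (\<Sum>j\<in>(F - {0<..}) \<inter> {..<0}. ?f j) + (\<Sum>j\<in>(F - {0<..}) - {..<0}. ?f j)"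
    by (rule sum.Int_Diff) (use assms(3) in auto)
  also have "(\<Sum>j\<in>(F - {0<..}) \<inter> {..<0}. ?f j) = (\<Sum>j\<in>uminus ` ((F - {0<..}) \<inter> {..<0}). ?f j)"
    by (subst sum.reindex) (auto simp: inj_on_def)
  also have "\<dots> \<le> 2 / s"
    by (rule pos_part[OF assms(2)]) (use assms(3) in auto)
  also have "(\<Sum>j\<in>(F - {0<..}) - {..<0}. ?f j) \<le> (\<Sum>j\<in>{0}. ?f j)"
    by (rule sum_mono2) (use fnn in auto)
  also have "(\<Sum>j\<in>{0}. ?f j) \<le> 1 / s"
    using assms(2) by (simp add: power2_eq_square divide_le_eq_1 field_simps)
  also have "(\<Sum>j\<in>F \<inter> {0<..}. ?f j) \<le> 2 / s"
    by (rule pos_part[OF assms(2)]) (use assms(3) in auto)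
  finally show ?thesis by (simp add: add_divide_distrib[symmetric])
qed

lemma WV_summable:
  assumes "V \<in> Hs True (- real m)"
  shows "WV m V summable_on UNIV"
proof -
  have e: "bracket k powr (2 * - real m) * (cmod (V k))\<^sup>2 = WV m V k" for k
  proof -
    have "bracket k powr (2 * - real m) = inverse (bracket k powr (real (2*m)))"
      by (simp add: powr_minus[symmetric])
    also have "\<dots> = inverse (bb m k)"
    proof -
      have "bracket k > 0" using bracket_ge1[of k] by linarith
      then have "bracket k powr (real (2*m)) = bracket k ^ (2*m)" by (rule powr_realpow)
      then show ?thesis by (simp add: bb_def)
    qed
    finally show ?thesis by (simp add: WV_def divide_inverse)
  qed
  from assms show ?thesis unfolding Hs_def using e by simp
qed

lemma WV_nonneg: "WV m V k \<ge> 0"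
  unfolding WV_def using bb_pos[of m k] by simp

lemma VN_nonneg: "VN m V \<ge> 0"
  unfolding VN_def by (rule infsum_nonneg) (simp add: WV_nonneg)

lemma Wsum1:
  assumes "V \<in> Hs True (- real m)" "finite G"
  shows "(\<Sum>j\<in>G. WV m V (n - j)) \<le> VN m V"
proof -
  have "(\<Sum>j\<in>G. WV m V (n - j)) = (\<Sum>k\<in>(\<lambda>j. n - j) ` G. WV m V k)"
    by (subst sum.reindex) (auto simp: inj_on_def)
  also have "\<dots> \<le> VN m V" unfolding VN_def
    by (rule fin_le_infsum[OF WV_summable[OF assms(1)] WV_nonneg]) (use assms(2) in auto)
  finally show ?thesis .
qed

lemma Wsum2:
  assumes "V \<in> Hs True (- real m)" "finite F"
  shows "(\<Sum>n\<in>F. WV m V (n - j)) \<le> VN m V"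
proof -
  have "(\<Sum>n\<in>F. WV m V (n - j)) = (\<Sum>k\<in>(\<lambda>n. n - j) ` F. WV m V k)"
    by (subst sum.reindex) (auto simp: inj_on_def)
  also have "\<dots> \<le> VN m V" unfolding VN_def
    by (rule fin_le_infsum[OF WV_summable[OF assms(1)] WV_nonneg]) (use assms(2) in auto)
  finally show ?thesis .
qed

lemma KK_pt:
  assumes "s \<ge> 1"
  shows "(cmod (KK m s V n j))\<^sup>2 \<le> 16^m * WV m V (n - j) * (1 / aa m s n + 1 / aa m s j)"
proof -
  define A where "A = aa m s n"
  define B where "B = aa m s j"
  define c where "c = (cmod (V (n - j)))\<^sup>2"
  define b where "b = bb m (n - j)"
  have A: "A > 0" and B: "B > 0" using aa_pos[OF assms] by (auto simp: A_def B_def)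
  have b: "b > 0" using bb_pos by (simp add: b_def)
  have c: "c \<ge> 0" by (simp add: c_def)
  have k: "(cmod (KK m s V n j))\<^sup>2 = c / (A * B)"
    using A B unfolding KK_def c_def A_def B_def
    by (simp add: norm_divide power_divide power_mult_distrib norm_mult real_sqrt_pow2)
  have bb: "b \<le> 16^m * (A + B)"
  proof -
    have "b \<le> 4^m * (bb m n + bb m j)" unfolding b_def by (rule bb_diff)
    also have "\<dots> \<le> 4^m * (4^m * A + 4^m * B)"
      unfolding A_def B_def using bb_le_aa[OF assms] by (intro mult_left_mono add_mono) auto
    also have "\<dots> = 16^m * (A + B)"
      by (simp add: algebra_simps power_mult_distrib[symmetric])
    finally show ?thesis .
  qed
  have "c / (A * B) = (c / b) * (b / (A * B))" using b by simp
  also have "\<dots> \<le> (c / b) * (16^m * (A + B) / (A * B))"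
    using A B b c bb by (intro mult_left_mono divide_right_mono) auto
  also have "\<dots> = 16^m * (c / b) * (1 / A + 1 / B)"
    using A B by (simp add: field_simps)
  finally show ?thesis unfolding k WV_def c_def b_def A_def B_def by simp
qed

lemma HS_KK:
  assumes "m \<ge> 1" "s \<ge> 1" "V \<in> Hs True (- real m)"
  shows "HSb (KK m s V) (2 * 16^m * (5 / s) * VN m V)"
  unfolding HSb_def
proof (intro allI impI)
  fix F G :: "int set" assume F: "finite F" and G: "finite G"
  let ?W = "\<lambda>n j. WV m V (n - j)"
  let ?a = "\<lambda>n. 1 / aa m s n"
  have ann: "\<And>n. ?a n \<ge> 0" using aa_pos[OF assms(2)] by (simp add: less_imp_le)
  have "(\<Sum>n\<in>F. \<Sum>j\<in>G. (cmod (KK m s V n j))\<^sup>2)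
      \<le> (\<Sum>n\<in>F. \<Sum>j\<in>G. 16^m * ?W n j * (?a n + ?a j))"
    by (intro sum_mono KK_pt assms)
  also have "\<dots> = 16^m * ((\<Sum>n\<in>F. ?a n * (\<Sum>j\<in>G. ?W n j)) + (\<Sum>j\<in>G. ?a j * (\<Sum>n\<in>F. ?W n j)))"
    by (simp add: sum_distrib_left sum_distrib_right algebra_simps sum.distrib sum.swap[of _ G F])
  also have "\<dots> \<le> 16^m * ((\<Sum>n\<in>F. ?a n * VN m V) + (\<Sum>j\<in>G. ?a j * VN m V))"
    using Wsum1[OF assms(3) G] Wsum2[OF assms(3) F] ann
    by (intro mult_left_mono add_mono sum_mono) auto
  also have "\<dots> = 16^m * ((\<Sum>n\<in>F. ?a n) + (\<Sum>j\<in>G. ?a j)) * VN m V"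
  proof -
    have e1: "(\<Sum>n\<in>F. ?a n * VN m V) = (\<Sum>n\<in>F. ?a n) * VN m V" by (rule sum_distrib_right[symmetric])
    have e2: "(\<Sum>n\<in>G. ?a n * VN m V) = (\<Sum>n\<in>G. ?a n) * VN m V" by (rule sum_distrib_right[symmetric])
    show ?thesis unfolding e1 e2 by (simp add: algebra_simps)
  qed
  also have "\<dots> \<le> 16^m * (5 / s + 5 / s) * VN m V"
    using Tsum[OF assms(1,2) F] Tsum[OF assms(1,2) G] VN_nonneg
    by (intro mult_right_mono mult_left_mono add_mono) auto
  finally show "(\<Sum>n\<in>F. \<Sum>j\<in>G. (cmod (KK m s V n j))\<^sup>2) \<le> 2 * 16^m * (5 / s) * VN m V"
    by (simp add: mult_ac)
qed



definition s0 :: "nat \<Rightarrow> (int \<Rightarrow> complex) \<Rightarrow> real" where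
  "s0 m V = max 1 (40 * 16^m * VN m V)"

definition sq :: "nat \<Rightarrow> real \<Rightarrow> int \<Rightarrow> complex" where
  "sq m s n = complex_of_real (sqrt (aa m s n))"

definition vv :: "nat \<Rightarrow> real \<Rightarrow> (int \<Rightarrow> complex) \<Rightarrow> int \<Rightarrow> complex" where
  "vv m s u = (\<lambda>n. sq m s n * u n)"

definition R0 :: "nat \<Rightarrow> real \<Rightarrow> (int \<Rightarrow> complex) \<Rightarrow> (int \<Rightarrow> complex) \<Rightarrow> int \<Rightarrow> complex" where
  "R0 m s V f = (\<lambda>n. Neu (KK m s V) (\<lambda>j. f j / sq m s j) n / sq m s n)"

lemma div_le_self1: "(b::real) \<ge> 1 \<Longrightarrow> a \<ge> 0 \<Longrightarrow> a / b \<le> a"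
  using mult_left_mono[of 1 b a] by (simp add: divide_le_eq)

lemma sq_bound: "(cmod (a + c * b))\<^sup>2 \<le> 2 * (cmod a)\<^sup>2 + 2 * (cmod c)\<^sup>2 * (cmod b)\<^sup>2"
proof -
  have "cmod (a + c * b) \<le> cmod a + cmod c * cmod b"
    by (metis norm_mult norm_triangle_ineq)
  then have "(cmod (a + c * b))\<^sup>2 \<le> (cmod a + cmod c * cmod b)\<^sup>2"
    by (intro power_mono) auto
  also have "\<dots> \<le> 2 * (cmod a)\<^sup>2 + 2 * (cmod c * cmod b)\<^sup>2"
    by (smt (verit) sum_squares_bound power2_sum zero_le_power2 power2_diff)
  finally show ?thesis by (simp add: power_mult_distrib)
qed

lemma wl2_lin:
  fixes w :: "int \<Rightarrow> real"
  assumes "\<And>n. w n \<ge> 0" "(\<lambda>n. w n * (cmod (u n))\<^sup>2) summable_on UNIV"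
    "(\<lambda>n. w n * (cmod (v n))\<^sup>2) summable_on UNIV"
  shows "(\<lambda>n. w n * (cmod (u n + c * v n))\<^sup>2) summable_on UNIV"
proof -
  have s: "(\<lambda>n. 2 * (w n * (cmod (u n))\<^sup>2) + 2 * (cmod c)\<^sup>2 * (w n * (cmod (v n))\<^sup>2)) summable_on UNIV"
    using assms by (intro summable_on_add summable_on_cmult_right) auto
  show ?thesis
  proof (rule summable_on_comparison_test[OF s])
    fix n
    have "w n * (cmod (u n + c * v n))\<^sup>2 \<le> w n * (2 * (cmod (u n))\<^sup>2 + 2 * (cmod c)\<^sup>2 * (cmod (v n))\<^sup>2)"
      using assms(1) sq_bound by (intro mult_left_mono) auto
    then show "w n * (cmod (u n + c * v n))\<^sup>2 \<le> 2 * (w n * (cmod (u n))\<^sup>2) + 2 * (cmod c)\<^sup>2 * (w n * (cmod (v n))\<^sup>2)"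
      by (simp add: algebra_simps)
    show "0 \<le> w n * (cmod (u n + c * v n))\<^sup>2" using assms(1) by simp
  qed
qed

lemma bracket_powr: "bracket n powr (2 * real m) = bb m n"
proof -
  have "bracket n > 0" using bracket_ge1[of n] by linarith
  then have "bracket n powr (real (2*m)) = bracket n ^ (2*m)" by (rule powr_realpow)
  then show ?thesis by (simp add: bb_def)
qed

lemma Hs0_iff: "h \<in> Hs p 0 \<longleftrightarrow> (\<forall>n. n \<notin> freqs p \<longrightarrow> h n = 0) \<and> l2 h"
proof -
  have "bracket n powr 0 = 1" for n using bracket_ge1[of n] by simp
  then show ?thesis unfolding Hs_def l2_def by simp
qed

lemma Hsm_iff: "h \<in> Hs p (real m) \<longleftrightarrow> (\<forall>n. n \<notin> freqs p \<longrightarrow> h n = 0) \<and>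
    (\<lambda>n. bb m n * (cmod (h n))\<^sup>2) summable_on UNIV"
  unfolding Hs_def by (simp add: bracket_powr)

lemma Hsm_lin:
  assumes "u \<in> Hs p (real m)" "v \<in> Hs p (real m)"
  shows "(\<lambda>n. u n + c * v n) \<in> Hs p (real m)"
  using assms wl2_lin[of "bb m" u v c] bb_pos[of m] unfolding Hsm_iff by (auto simp: less_imp_le)

lemma Hs0_lin:
  assumes "u \<in> Hs p 0" "v \<in> Hs p 0"
  shows "(\<lambda>n. u n + c * v n) \<in> Hs p 0"
  using assms l2_lin unfolding Hs0_iff by auto

lemma Hsm_Hs0:
  assumes "u \<in> Hs p (real m)"
  shows "u \<in> Hs p 0"
proof -
  have "(\<lambda>n. (cmod (u n))\<^sup>2) summable_on UNIV"
  proof (rule summable_on_comparison_test[of "\<lambda>n. bb m n * (cmod (u n))\<^sup>2"])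
    show "(\<lambda>n. bb m n * (cmod (u n))\<^sup>2) summable_on UNIV" using assms by (simp add: Hsm_iff)
    fix n
    have "1 * (cmod (u n))\<^sup>2 \<le> bb m n * (cmod (u n))\<^sup>2"
      using bb_ge1[of m n] by (intro mult_right_mono) auto
    then show "(cmod (u n))\<^sup>2 \<le> bb m n * (cmod (u n))\<^sup>2" by simp
  qed auto
  then show ?thesis using assms unfolding Hs0_iff Hsm_iff l2_def by auto
qed

lemma Hsm_fin:
  assumes "\<And>n. n \<notin> freqs p \<Longrightarrow> h n = 0" "\<And>F. finite F \<Longrightarrow> (\<Sum>n\<in>F. bb m n * (cmod (h n))\<^sup>2) \<le> B"
  shows "h \<in> Hs p (real m)"
  using fin_bound_summable[of "\<lambda>n. bb m n * (cmod (h n))\<^sup>2" B] assms bb_pos[of m]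
  unfolding Hsm_iff by (auto simp: less_imp_le)

lemma Hsm_finsum:
  assumes "h \<in> Hs p (real m)" "finite F"
  shows "(\<Sum>n\<in>F. bb m n * (cmod (h n))\<^sup>2) \<le> (\<Sum>\<^sub>\<infinity>n. bb m n * (cmod (h n))\<^sup>2)"
  using assms bb_pos[of m] unfolding Hsm_iff by (intro fin_le_infsum) (auto simp: less_imp_le)

context
  fixes m :: nat and V :: "int \<Rightarrow> complex" and s :: real
  assumes m1: "m \<ge> 1" and VH: "V \<in> Hs True (- real m)" and sdef: "s = s0 m V"
begin

lemma s1: "s \<ge> 1" unfolding sdef s0_def by simp

lemma aa_pos': "aa m s n > 0" using aa_pos[OF s1] .

lemma sq_nz: "sq m s n \<noteq> 0"
  unfolding sq_def using aa_pos'[of n] by simp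

lemma sq_sq: "sq m s n * sq m s n = complex_of_real (aa m s n)"
  unfolding sq_def using aa_pos'[of n] by (simp flip: of_real_mult)

lemma cmod_sq: "cmod (sq m s n) = sqrt (aa m s n)"
  unfolding sq_def using aa_pos'[of n] by simp

lemma sq_ge1: "cmod (sq m s n) \<ge> 1"
proof -
  have "s\<^sup>2 \<le> aa m s n" using aa_ge[OF m1, of n s] zero_le_power2[of "real_of_int n"] by linarith
  then have "sqrt (s\<^sup>2) \<le> sqrt (aa m s n)" by (rule real_sqrt_le_mono)
  then have "s \<le> sqrt (aa m s n)" using s1 by simp
  then show ?thesis using s1 cmod_sq[of n] by linarith
qed

lemma HS14: "HSb (KK m s V) (1/4)"
proof -
  have H: "HSb (KK m s V) (2 * 16^m * (5 / s) * VN m V)" by (rule HS_KK[OF m1 s1 VH])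
  have "2 * 16^m * (5 / s) * VN m V \<le> 1/4"
  proof -
    have "40 * 16^m * VN m V \<le> s" unfolding sdef s0_def by simp
    then have "10 * 16^m * VN m V / s \<le> 1/4" using s1 by (simp add: field_simps)
    then show ?thesis by (simp add: field_simps)
  qed
  with H show ?thesis unfolding HSb_def by (meson order.trans)
qed

lemma KK_supp:
  assumes "n \<notin> freqs p" "j \<in> freqs p"
  shows "KK m s V n j = 0"
proof -
  have "odd (n - j)" using assms by (cases p) (auto simp: freqs_def)
  then have "(n - j) \<notin> freqs True" by (simp add: freqs_def)
  then have "V (n - j) = 0" using VH unfolding Hs_def by auto
  then show ?thesis by (simp add: KK_def)
qed

lemma aa_le_bb: "aa m s n \<le> (pi^(2*m) + s\<^sup>2) * bb m n"
proof -
  have "(real_of_int n * pi)^(2*m) = \<bar>real_of_int n\<bar>^(2*m) * pi^(2*m)"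
    by (subst even_pow_abs) (simp add: abs_mult power_mult_distrib)
  also have "\<dots> \<le> bb m n * pi^(2*m)"
    unfolding bb_def bracket_def by (intro mult_right_mono power_mono) auto
  finally have 1: "(real_of_int n * pi)^(2*m) \<le> bb m n * pi^(2*m)" .
  have 2: "s\<^sup>2 \<le> s\<^sup>2 * bb m n" using bb_ge1[of m n] by (simp add: mult_le_cancel_left1)
  have 3: "aa m s n = (real_of_int n * pi)^(2*m) + s\<^sup>2" by (simp add: aa_def)
  have 4: "(pi^(2*m) + s\<^sup>2) * bb m n = bb m n * pi^(2*m) + s\<^sup>2 * bb m n" by (simp add: algebra_simps)
  show ?thesis unfolding 3 4 using 1 2 by linarith
qed

lemma vv_l2:
  assumes "u \<in> Hs p (real m)"
  shows "l2 (vv m s u)"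
proof -
  let ?C = "pi^(2*m) + s\<^sup>2"
  have "(\<lambda>n. ?C * (bb m n * (cmod (u n))\<^sup>2)) summable_on UNIV"
    using assms unfolding Hsm_iff by (intro summable_on_cmult_right) auto
  then show ?thesis unfolding l2_def
  proof (rule summable_on_comparison_test)
    fix n
    have "(cmod (vv m s u n))\<^sup>2 = aa m s n * (cmod (u n))\<^sup>2"
      unfolding vv_def using aa_pos'[of n] by (simp add: norm_mult cmod_sq power_mult_distrib)
    also have "\<dots> \<le> ?C * bb m n * (cmod (u n))\<^sup>2"
      using aa_le_bb by (intro mult_right_mono) auto
    finally show "(cmod (vv m s u n))\<^sup>2 \<le> ?C * (bb m n * (cmod (u n))\<^sup>2)" by simp
  qed auto
qed

lemma vv_supp: "u \<in> Hs p (real m) \<Longrightarrow> n \<notin> freqs p \<Longrightarrow> vv m s u n = 0"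
  unfolding vv_def Hsm_iff by auto

lemma mulV_eq:
  assumes "u \<in> Hs p (real m)"
  shows "mulV V u n = sq m s n * Mop (KK m s V) (vv m s u) n"
proof -
  have pt: "V (n - j) * u j = sq m s n * (KK m s V n j * vv m s u j)" for j
    unfolding KK_def vv_def using sq_nz[of n] sq_nz[of j]
    by (simp add: sq_def field_simps)
  have "mulV V u n = (\<Sum>\<^sub>\<infinity>j. sq m s n * (KK m s V n j * vv m s u j))"
    unfolding mulV_def by (simp add: pt)
  also have "\<dots> = sq m s n * Mop (KK m s V) (vv m s u) n"
    unfolding Mop_def by (rule infsum_cmult_right) (use HS_apply[OF HS14 vv_l2[OF assms]] in blast)
  finally show ?thesis .
qed

lemma Sop_shift:
  assumes "u \<in> Hs p (real m)"
  shows "Sop m V u n + complex_of_real (s\<^sup>2) * u n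
     = sq m s n * (vv m s u n + Mop (KK m s V) (vv m s u) n)"
proof -
  have "Dpow m u n + complex_of_real (s\<^sup>2) * u n = complex_of_real (aa m s n) * u n"
    unfolding Dpow_def aa_def by (simp add: algebra_simps)
  also have "\<dots> = sq m s n * vv m s u n" unfolding vv_def by (simp flip: sq_sq add: mult.assoc)
  finally show ?thesis unfolding Sop_def using mulV_eq[OF assms, of n] by (simp add: algebra_simps)
qed

lemma N2_uminus: "N2 (\<lambda>n. - x n) = N2 x" unfolding N2_def by simp

lemma inj_shift:
  assumes "u \<in> Hs p (real m)" "\<And>n. Sop m V u n + complex_of_real (s\<^sup>2) * u n = 0"
  shows "u n = 0"
proof -
  let ?v = "vv m s u"
  have l: "l2 ?v" by (rule vv_l2[OF assms(1)])
  have e: "Mop (KK m s V) ?v = (\<lambda>n. - ?v n)"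
  proof
    fix n
    have "sq m s n * (?v n + Mop (KK m s V) ?v n) = 0" using Sop_shift[OF assms(1)] assms(2) by simp
    then have "?v n + Mop (KK m s V) ?v n = 0" using sq_nz[of n] by simp
    then show "Mop (KK m s V) ?v n = - ?v n" by (simp add: add_eq_0_iff)
  qed
  have "N2 ?v \<le> 1/4 * N2 ?v" using HS_bound[OF HS14 l] e N2_uminus by auto
  then have "N2 ?v = 0" using N2_nonneg[of ?v] by linarith
  then have "(cmod (?v n))\<^sup>2 \<le> 0" using l2_coord[OF l, of n] by simp
  then have "?v n = 0" by simp
  then show ?thesis unfolding vv_def using sq_nz[of n] by simp
qed

lemma Sop_lin:
  assumes "u \<in> Hs p (real m)" "w \<in> Hs p (real m)"
  shows "Sop m V (\<lambda>n. u n + c * w n) n = Sop m V u n + c * Sop m V w n"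
proof -
  have vl: "vv m s (\<lambda>n. u n + c * w n) = (\<lambda>n. vv m s u n + c * vv m s w n)"
    unfolding vv_def by (auto simp: algebra_simps)
  have "mulV V (\<lambda>n. u n + c * w n) n = sq m s n * Mop (KK m s V) (\<lambda>n. vv m s u n + c * vv m s w n) n"
    using mulV_eq[OF Hsm_lin[OF assms]] vl by simp
  also have "\<dots> = sq m s n * (Mop (KK m s V) (vv m s u) n + c * Mop (KK m s V) (vv m s w) n)"
    using Mop_lin[OF HS14 vv_l2[OF assms(1)] vv_l2[OF assms(2)]] by simp
  also have "\<dots> = mulV V u n + c * mulV V w n"
    using mulV_eq[OF assms(1)] mulV_eq[OF assms(2)] by (simp add: algebra_simps)
  finally show ?thesis unfolding Sop_def Dpow_def by (simp add: algebra_simps)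
qed


lemma R0_props:
  assumes f: "f \<in> Hs p 0"
  shows "R0 m s V f \<in> Hs p (real m)"
    and "\<And>n. Sop m V (R0 m s V f) n + complex_of_real (s\<^sup>2) * R0 m s V f n = f n"
    and "N2 (R0 m s V f) \<le> 4 * N2 f"
    and "\<And>F. finite F \<Longrightarrow> (\<Sum>n\<in>F. bb m n * (cmod (R0 m s V f n))\<^sup>2) \<le> 4^m * (4 * N2 f)"
proof -
  let ?K = "KK m s V"
  define g where "g = (\<lambda>j. f j / sq m s j)"
  have fl: "l2 f" and fs: "\<And>n. n \<notin> freqs p \<Longrightarrow> f n = 0" using f unfolding Hs0_iff by auto
  have gle: "(cmod (g j))\<^sup>2 \<le> (cmod (f j))\<^sup>2" for j
  proof -
    have "cmod (g j) = cmod (f j) / cmod (sq m s j)" unfolding g_def by (simp add: norm_divide)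
    also have "\<dots> \<le> cmod (f j)" using sq_ge1[of j] by (intro div_le_self1) auto
    finally show ?thesis by (intro power_mono) auto
  qed
  have gl: "l2 g" "N2 g \<le> N2 f"
  proof -
    have "l2 g \<and> N2 g \<le> N2 f"
    proof (rule l2_fin_bound)
      fix F :: "int set" assume "finite F"
      then have "(\<Sum>n\<in>F. (cmod (g n))\<^sup>2) \<le> (\<Sum>n\<in>F. (cmod (f n))\<^sup>2)" by (intro sum_mono gle)
      also have "\<dots> \<le> N2 f" by (rule l2_fin_le[OF fl \<open>finite F\<close>])
      finally show "(\<Sum>n\<in>F. (cmod (g n))\<^sup>2) \<le> N2 f" .
    qed
    then show "l2 g" "N2 g \<le> N2 f" by auto
  qed
  have gs: "\<And>n. n \<notin> freqs p \<Longrightarrow> g n = 0" using fs unfolding g_def by simp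
  define v where "v = Neu ?K g"
  have vl: "l2 v" "N2 v \<le> 4 * N2 g" using Neu_l2[OF HS14 gl(1)] unfolding v_def by auto
  have vs: "\<And>n. n \<notin> freqs p \<Longrightarrow> v n = 0"
    unfolding v_def by (rule Neu_supp[OF HS14 gl(1), of "freqs p"]) (use KK_supp gs in auto)
  have veq: "\<And>n. v n + Mop ?K v n = g n" unfolding v_def by (rule Neu_eq[OF HS14 gl(1)])
  have u_def: "R0 m s V f = (\<lambda>n. v n / sq m s n)" unfolding R0_def v_def g_def by simp
  have wfin: "(\<Sum>n\<in>F. bb m n * (cmod (R0 m s V f n))\<^sup>2) \<le> 4^m * (4 * N2 f)" if F: "finite F" for F
  proof -
    have "(\<Sum>n\<in>F. bb m n * (cmod (R0 m s V f n))\<^sup>2) \<le> (\<Sum>n\<in>F. 4^m * (cmod (v n))\<^sup>2)"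
    proof (rule sum_mono)
      fix n
      have "bb m n * (cmod (R0 m s V f n))\<^sup>2 = bb m n / aa m s n * (cmod (v n))\<^sup>2"
        unfolding u_def using aa_pos'[of n] by (simp add: norm_divide cmod_sq power_divide)
      also have "\<dots> \<le> 4^m * (cmod (v n))\<^sup>2"
        using bb_le_aa[OF s1, of m n] aa_pos'[of n] by (intro mult_right_mono) (auto simp: divide_le_eq mult.commute)
      finally show "bb m n * (cmod (R0 m s V f n))\<^sup>2 \<le> 4^m * (cmod (v n))\<^sup>2" .
    qed
    also have "\<dots> = 4^m * (\<Sum>n\<in>F. (cmod (v n))\<^sup>2)" by (simp add: sum_distrib_left)
    also have "\<dots> \<le> 4^m * (4 * N2 f)"
      using l2_fin_le[OF vl(1) F] vl(2) gl(2) by (intro mult_left_mono) auto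
    finally show ?thesis .
  qed
  then show "\<And>F. finite F \<Longrightarrow> (\<Sum>n\<in>F. bb m n * (cmod (R0 m s V f n))\<^sup>2) \<le> 4^m * (4 * N2 f)" .
  show uH: "R0 m s V f \<in> Hs p (real m)"
    by (rule Hsm_fin[OF _ wfin]) (use vs in \<open>auto simp: u_def\<close>)
  have vvu: "vv m s (R0 m s V f) = v" unfolding vv_def u_def using sq_nz by auto
  show "\<And>n. Sop m V (R0 m s V f) n + complex_of_real (s\<^sup>2) * R0 m s V f n = f n"
    using Sop_shift[OF uH] veq sq_nz unfolding vvu g_def by simp
  have "l2 (R0 m s V f) \<and> N2 (R0 m s V f) \<le> N2 v"
  proof (rule l2_fin_bound)
    fix F :: "int set" assume F: "finite F"
    have "(\<Sum>n\<in>F. (cmod (R0 m s V f n))\<^sup>2) \<le> (\<Sum>n\<in>F. (cmod (v n))\<^sup>2)"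
    proof (rule sum_mono)
      fix n
      have "cmod (R0 m s V f n) = cmod (v n) / cmod (sq m s n)" unfolding u_def by (simp add: norm_divide)
      also have "\<dots> \<le> cmod (v n)" using sq_ge1[of n] by (intro div_le_self1) auto
      finally show "(cmod (R0 m s V f n))\<^sup>2 \<le> (cmod (v n))\<^sup>2" by (intro power_mono) auto
    qed
    also have "\<dots> \<le> N2 v" by (rule l2_fin_le[OF vl(1) F])
    finally show "(\<Sum>n\<in>F. (cmod (R0 m s V f n))\<^sup>2) \<le> N2 v" .
  qed
  then show "N2 (R0 m s V f) \<le> 4 * N2 f" using vl(2) gl(2) by linarith
qed


lemma Sop_eta: "(\<lambda>n. Dpow m u n + mulV V u n) = Sop m V u"
  unfolding Sop_def by simp

lemma Sdom_Hsm: "u \<in> Sdom p m V \<Longrightarrow> u \<in> Hs p (real m)"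
  unfolding Sdom_def by simp

lemma Sdom_Sop: "u \<in> Sdom p m V \<Longrightarrow> Sop m V u \<in> Hs p 0"
  unfolding Sdom_def Sop_eta by simp

lemma uniq_shift:
  assumes "u \<in> Hs p (real m)" "w \<in> Hs p (real m)"
    "\<And>n. Sop m V u n + complex_of_real (s\<^sup>2) * u n = Sop m V w n + complex_of_real (s\<^sup>2) * w n"
  shows "u = w"
proof
  fix n
  let ?d = "\<lambda>n. u n + (-1) * w n"
  have dH: "?d \<in> Hs p (real m)" by (rule Hsm_lin[OF assms(1,2)])
  have "Sop m V ?d n' + complex_of_real (s\<^sup>2) * ?d n' = 0" for n'
  proof -
    have e: "Sop m V ?d n' = Sop m V u n' + (-1) * Sop m V w n'" by (rule Sop_lin[OF assms(1,2)])
    have "Sop m V ?d n' + complex_of_real (s\<^sup>2) * ?d n'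
       = (Sop m V u n' + complex_of_real (s\<^sup>2) * u n') - (Sop m V w n' + complex_of_real (s\<^sup>2) * w n')"
      unfolding e by (simp add: algebra_simps)
    then show ?thesis using assms(3)[of n'] by simp
  qed
  from inj_shift[OF dH this] show "u n = w n" by simp
qed

lemma l2norm_N2: "l2norm f = sqrt (N2 f)" unfolding l2norm_def N2_def by simp

lemma R0_res: "is_resolvent p m V (- complex_of_real (s\<^sup>2)) (R0 m s V)"
  unfolding is_resolvent_def
proof (intro conjI ballI)
  fix f assume f: "f \<in> Hs p 0"
  let ?u = "R0 m s V f"
  note P = R0_props[OF f]
  have "Sop m V ?u = (\<lambda>n. f n + (- complex_of_real (s\<^sup>2)) * ?u n)"
  proof
    fix n
    have "Sop m V ?u n = f n - complex_of_real (s\<^sup>2) * ?u n"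
      by (simp only: eq_diff_eq) (rule P(2))
    then show "Sop m V ?u n = f n + (- complex_of_real (s\<^sup>2)) * ?u n" by simp
  qed
  then have "Sop m V ?u \<in> Hs p 0" using Hs0_lin[OF f Hsm_Hs0[OF P(1)], of "- complex_of_real (s\<^sup>2)"] by simp
  then show "?u \<in> Sdom p m V" unfolding Sdom_def Sop_eta using P(1) by simp
  show "(\<lambda>n. Sop m V ?u n - - complex_of_real (s\<^sup>2) * ?u n) = f"
  proof
    fix n show "Sop m V ?u n - - complex_of_real (s\<^sup>2) * ?u n = f n" using P(2)[of n] by simp
  qed
next
  fix u assume u: "u \<in> Sdom p m V"
  let ?f = "\<lambda>n. Sop m V u n - - complex_of_real (s\<^sup>2) * u n"
  have uH: "u \<in> Hs p (real m)" using Sdom_Hsm[OF u] .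
  have f: "?f \<in> Hs p 0" using Hs0_lin[OF Sdom_Sop[OF u] Hsm_Hs0[OF uH], of "complex_of_real (s\<^sup>2)"] by simp
  show "R0 m s V ?f = u"
    by (rule uniq_shift[OF R0_props(1)[OF f] uH]) (use R0_props(2)[OF f] in simp)
next
  show "\<exists>C. \<forall>f\<in>Hs p 0. l2norm (R0 m s V f) \<le> C * l2norm f"
  proof (intro exI ballI)
    fix f assume f: "f \<in> Hs p 0"
    have "l2norm (R0 m s V f) \<le> sqrt (4 * N2 f)"
      unfolding l2norm_N2 using R0_props(3)[OF f] by simp
    also have "\<dots> = 2 * l2norm f" by (simp add: l2norm_N2 real_sqrt_mult)
    finally show "l2norm (R0 m s V f) \<le> 2 * l2norm f" .
  qed
qed

lemma R_identity:
  assumes R: "is_resolvent p m V lam R" and f: "f \<in> Hs p 0"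
  shows "R f = (\<lambda>n. R0 m s V f n + (lam + complex_of_real (s\<^sup>2)) * R0 m s V (R f) n)"
proof -
  let ?c = "lam + complex_of_real (s\<^sup>2)"
  have uS: "R f \<in> Sdom p m V" and ueq: "(\<lambda>n. Sop m V (R f) n - lam * R f n) = f"
    using R f unfolding is_resolvent_def by auto
  have uH: "R f \<in> Hs p (real m)" by (rule Sdom_Hsm[OF uS])
  have u0: "R f \<in> Hs p 0" by (rule Hsm_Hs0[OF uH])
  have wH: "(\<lambda>n. R0 m s V f n + ?c * R0 m s V (R f) n) \<in> Hs p (real m)"
    by (rule Hsm_lin[OF R0_props(1)[OF f] R0_props(1)[OF u0]])
  show ?thesis
  proof (rule uniq_shift[OF uH wH])
    fix n
    have e1: "Sop m V (R f) n - lam * R f n = f n" using fun_cong[OF ueq, of n] by simp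
    have e2: "Sop m V (\<lambda>n. R0 m s V f n + ?c * R0 m s V (R f) n) n
        = Sop m V (R0 m s V f) n + ?c * Sop m V (R0 m s V (R f)) n"
      by (rule Sop_lin[OF R0_props(1)[OF f] R0_props(1)[OF u0]])
    have e3: "Sop m V (R0 m s V f) n + complex_of_real (s\<^sup>2) * R0 m s V f n = f n"
      by (rule R0_props(2)[OF f])
    have e4: "Sop m V (R0 m s V (R f)) n + complex_of_real (s\<^sup>2) * R0 m s V (R f) n = R f n"
      by (rule R0_props(2)[OF u0])
    have "Sop m V (\<lambda>n. R0 m s V f n + ?c * R0 m s V (R f) n) n +
        complex_of_real (s\<^sup>2) * (R0 m s V f n + ?c * R0 m s V (R f) n)
      = (Sop m V (R0 m s V f) n + complex_of_real (s\<^sup>2) * R0 m s V f n)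
        + ?c * (Sop m V (R0 m s V (R f)) n + complex_of_real (s\<^sup>2) * R0 m s V (R f) n)"
      unfolding e2 by (simp add: algebra_simps)
    also have "\<dots> = f n + ?c * R f n" unfolding e3 e4 ..
    also have "\<dots> = (Sop m V (R f) n - lam * R f n) + ?c * R f n" unfolding e1 ..
    also have "\<dots> = Sop m V (R f) n + complex_of_real (s\<^sup>2) * R f n" by (simp add: algebra_simps)
    finally show "Sop m V (R f) n + complex_of_real (s\<^sup>2) * R f n =
        Sop m V (\<lambda>n. R0 m s V f n + ?c * R0 m s V (R f) n) n +
        complex_of_real (s\<^sup>2) * (R0 m s V f n + ?c * R0 m s V (R f) n)" by simp
  qed
qed

end


context
  fixes m :: nat and V :: "int \<Rightarrow> complex" and s :: real
  assumes m1: "m \<ge> 1" and VH: "V \<in> Hs True (- real m)" and sdef: "s = s0 m V"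
begin

lemma R_weighted:
  assumes R: "is_resolvent p m V lam R"
  shows "\<exists>B\<ge>0. \<forall>f\<in>Hs p 0. \<forall>F. finite F \<longrightarrow> (\<Sum>n\<in>F. bb m n * (cmod (R f n))\<^sup>2) \<le> B * N2 f"
proof -
  obtain C where C: "\<forall>f\<in>Hs p 0. l2norm (R f) \<le> C * l2norm f" using R unfolding is_resolvent_def by blast
  let ?c = "lam + complex_of_real (s\<^sup>2)"
  define B where "B = 2 * (4^m * 4) + 2 * (cmod ?c)\<^sup>2 * (4^m * 4) * C\<^sup>2"
  show ?thesis
  proof (intro exI conjI ballI allI impI)
    show "B \<ge> 0" unfolding B_def by simp
    fix f and F :: "int set" assume f: "f \<in> Hs p 0" and F: "finite F"
    have RS: "R f \<in> Sdom p m V" using R f unfolding is_resolvent_def by blast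
    have u0: "R f \<in> Hs p 0" by (rule Hsm_Hs0[OF Sdom_Hsm[OF m1 VH sdef RS]])
    have N2R: "N2 (R f) \<le> C\<^sup>2 * N2 f"
    proof -
      have a: "sqrt (N2 (R f)) \<le> C * sqrt (N2 f)" using C f by (simp add: l2norm_N2[OF m1 VH sdef])
      have "C * sqrt (N2 f) \<le> \<bar>C\<bar> * sqrt (N2 f)"
        by (intro mult_right_mono) (auto simp: N2_nonneg)
      with a have "sqrt (N2 (R f)) \<le> \<bar>C\<bar> * sqrt (N2 f)" by linarith
      then have "(sqrt (N2 (R f)))\<^sup>2 \<le> (\<bar>C\<bar> * sqrt (N2 f))\<^sup>2" by (intro power_mono) (auto simp: N2_nonneg)
      then show ?thesis by (simp add: power_mult_distrib N2_nonneg)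
    qed
    have id: "R f = (\<lambda>n. R0 m s V f n + ?c * R0 m s V (R f) n)" by (rule R_identity[OF m1 VH sdef R f])
    have "(\<Sum>n\<in>F. bb m n * (cmod (R f n))\<^sup>2) \<le> (\<Sum>n\<in>F. 2 * (bb m n * (cmod (R0 m s V f n))\<^sup>2)
         + 2 * (cmod ?c)\<^sup>2 * (bb m n * (cmod (R0 m s V (R f) n))\<^sup>2))"
    proof (rule sum_mono)
      fix n
      have e: "R f n = R0 m s V f n + ?c * R0 m s V (R f) n" using fun_cong[OF id, of n] by simp
      have "bb m n * (cmod (R f n))\<^sup>2 \<le> bb m n * (2 * (cmod (R0 m s V f n))\<^sup>2
            + 2 * (cmod ?c)\<^sup>2 * (cmod (R0 m s V (R f) n))\<^sup>2)"
        unfolding e using bb_pos[of m n] sq_bound[of "R0 m s V f n" ?c "R0 m s V (R f) n"]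
        by (intro mult_left_mono) auto
      then show "bb m n * (cmod (R f n))\<^sup>2 \<le> 2 * (bb m n * (cmod (R0 m s V f n))\<^sup>2)
         + 2 * (cmod ?c)\<^sup>2 * (bb m n * (cmod (R0 m s V (R f) n))\<^sup>2)" by (simp add: algebra_simps)
    qed
    also have "\<dots> = 2 * (\<Sum>n\<in>F. bb m n * (cmod (R0 m s V f n))\<^sup>2)
         + 2 * (cmod ?c)\<^sup>2 * (\<Sum>n\<in>F. bb m n * (cmod (R0 m s V (R f) n))\<^sup>2)"
      by (simp add: sum.distrib sum_distrib_left)
    also have "\<dots> \<le> 2 * (4^m * (4 * N2 f)) + 2 * (cmod ?c)\<^sup>2 * (4^m * (4 * N2 (R f)))"
      using R0_props(4)[OF m1 VH sdef f F] R0_props(4)[OF m1 VH sdef u0 F]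
      by (intro add_mono mult_left_mono) auto
    also have "\<dots> \<le> 2 * (4^m * (4 * N2 f)) + 2 * (cmod ?c)\<^sup>2 * (4^m * (4 * (C\<^sup>2 * N2 f)))"
      using N2R by (intro add_mono mult_left_mono) auto
    also have "\<dots> = B * N2 f" unfolding B_def by (simp add: algebra_simps)
    finally show "(\<Sum>n\<in>F. bb m n * (cmod (R f n))\<^sup>2) \<le> B * N2 f" .
  qed
qed

end


lemma compact_embed:
  fixes h :: "nat \<Rightarrow> int \<Rightarrow> complex"
  assumes supp: "\<And>k n. n \<notin> freqs p \<Longrightarrow> h k n = 0"
    and bnd: "\<And>k F. finite F \<Longrightarrow> (\<Sum>n\<in>F. bracket n * (cmod (h k n))\<^sup>2) \<le> M"
  shows "\<exists>r g. strict_mono r \<and> g \<in> Hs p 0 \<and> (\<lambda>k. l2norm (\<lambda>n. h (r k) n - g n)) \<longlonglongrightarrow> 0"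
proof -
  have M0: "M \<ge> 0" using bnd[of "{}"] by simp
  have wle: "(cmod z)\<^sup>2 \<le> bracket n * (cmod z)\<^sup>2" for z n
    using bracket_ge1[of n] mult_right_mono[of 1 "bracket n" "(cmod z)\<^sup>2"] by simp
  have coord: "cmod (h k n) \<le> sqrt M" for k n
  proof -
    have "(cmod (h k n))\<^sup>2 \<le> M" using wle[of "h k n" n] bnd[of "{n}" k] by simp
    then show ?thesis by (simp add: real_le_rsqrt)
  qed
  define P where "P = (\<lambda>i (s::nat\<Rightarrow>nat). convergent (\<lambda>k. h (s k) (int_decode i)))"
  interpret S: subseqs P
  proof
    fix i and s :: "nat \<Rightarrow> nat" assume "strict_mono s"
    have "bounded (range (\<lambda>k. h (s k) (int_decode i)))"
      unfolding bounded_iff using coord by blast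
    then obtain l r where r: "strict_mono r" "((\<lambda>k. h (s k) (int_decode i)) \<circ> r) \<longlonglongrightarrow> l"
      using bounded_imp_convergent_subsequence by blast
    then show "\<exists>r'. strict_mono r' \<and> P i (s \<circ> r')"
      unfolding P_def convergent_def by (auto simp: o_def)
  qed
  define r where "r = S.diagseq"
  have r_mono: "strict_mono r" unfolding r_def by (rule S.subseq_diagseq)
  have conv: "convergent (\<lambda>k. h (r k) n)" for n
  proof -
    have "P (int_encode n) (S.diagseq \<circ> (+) (Suc (int_encode n)))"
    proof (rule S.diagseq_holds)
      fix r' :: "nat \<Rightarrow> nat" and s' :: "nat \<Rightarrow> nat" and i
      assume a: "strict_mono r'" "P i s'"
      then obtain L where "(\<lambda>k. h (s' k) (int_decode i)) \<longlonglongrightarrow> L" unfolding P_def convergent_def by blast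
      from LIMSEQ_subseq_LIMSEQ[OF this a(1)] show "P i (s' \<circ> r')"
        unfolding P_def convergent_def by (auto simp: o_def)
    qed
    then obtain L where "(\<lambda>k. h (S.diagseq (Suc (int_encode n) + k)) n) \<longlonglongrightarrow> L"
      unfolding P_def convergent_def by (auto simp: o_def)
    then have "(\<lambda>k. h (S.diagseq (k + Suc (int_encode n))) n) \<longlonglongrightarrow> L" by (simp add: add.commute)
    then have "(\<lambda>k. h (S.diagseq k) n) \<longlonglongrightarrow> L" by (rule LIMSEQ_offset)
    then show ?thesis unfolding r_def convergent_def by blast
  qed
  define g where "g n = lim (\<lambda>k. h (r k) n)" for n
  have lim: "(\<lambda>k. h (r k) n) \<longlonglongrightarrow> g n" for n
    unfolding g_def using conv convergent_LIMSEQ_iff by blast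
  have gsupp: "g n = 0" if "n \<notin> freqs p" for n
  proof -
    have "(\<lambda>k. h (r k) n) = (\<lambda>k. 0)" using supp that by auto
    then show ?thesis using LIMSEQ_unique[OF lim[of n]] by simp
  qed
  have gfin: "(\<Sum>n\<in>F. bracket n * (cmod (g n))\<^sup>2) \<le> M" if F: "finite F" for F
  proof (rule LIMSEQ_le_const2)
    show "(\<lambda>k. \<Sum>n\<in>F. bracket n * (cmod (h (r k) n))\<^sup>2) \<longlonglongrightarrow> (\<Sum>n\<in>F. bracket n * (cmod (g n))\<^sup>2)"
      by (intro tendsto_intros lim)
    show "\<exists>N. \<forall>k\<ge>N. (\<Sum>n\<in>F. bracket n * (cmod (h (r k) n))\<^sup>2) \<le> M" using bnd F by blast
  qed
  have gl2: "l2 g"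
  proof -
    have "l2 g \<and> N2 g \<le> M"
    proof (rule l2_fin_bound)
      fix F :: "int set" assume F: "finite F"
      have "(\<Sum>n\<in>F. (cmod (g n))\<^sup>2) \<le> (\<Sum>n\<in>F. bracket n * (cmod (g n))\<^sup>2)"
        by (intro sum_mono wle)
      also have "\<dots> \<le> M" by (rule gfin[OF F])
      finally show "(\<Sum>n\<in>F. (cmod (g n))\<^sup>2) \<le> M" .
    qed
    then show ?thesis by blast
  qed
  have g0: "g \<in> Hs p 0" unfolding Hs0_iff using gsupp gl2 by blast
  define d where "d k n = h (r k) n - g n" for k n
  have dfin: "(\<Sum>n\<in>F. bracket n * (cmod (d k n))\<^sup>2) \<le> 4 * M" if F: "finite F" for F k
  proof -
    have "(\<Sum>n\<in>F. bracket n * (cmod (d k n))\<^sup>2)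
       \<le> (\<Sum>n\<in>F. 2 * (bracket n * (cmod (h (r k) n))\<^sup>2) + 2 * (bracket n * (cmod (g n))\<^sup>2))"
    proof (rule sum_mono)
      fix n
      have "(cmod (d k n))\<^sup>2 \<le> 2 * (cmod (h (r k) n))\<^sup>2 + 2 * (cmod (-1::complex))\<^sup>2 * (cmod (g n))\<^sup>2"
        unfolding d_def using sq_bound[of "h (r k) n" "-1" "g n"] by simp
      then have "bracket n * (cmod (d k n))\<^sup>2 \<le> bracket n * (2 * (cmod (h (r k) n))\<^sup>2 + 2 * (cmod (g n))\<^sup>2)"
        using bracket_ge1[of n] by (intro mult_left_mono) auto
      then show "bracket n * (cmod (d k n))\<^sup>2
         \<le> 2 * (bracket n * (cmod (h (r k) n))\<^sup>2) + 2 * (bracket n * (cmod (g n))\<^sup>2)"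
        by (simp add: algebra_simps)
    qed
    also have "\<dots> = 2 * (\<Sum>n\<in>F. bracket n * (cmod (h (r k) n))\<^sup>2) + 2 * (\<Sum>n\<in>F. bracket n * (cmod (g n))\<^sup>2)"
      by (simp add: sum.distrib sum_distrib_left)
    also have "\<dots> \<le> 2 * M + 2 * M" using bnd[OF F] gfin[OF F] by (intro add_mono) auto
    finally show ?thesis by simp
  qed
  have main: "(\<lambda>k. N2 (d k)) \<longlonglongrightarrow> 0"
  proof (rule LIMSEQ_I)
    fix e :: real assume e: "e > 0"
    define N where "N = nat \<lceil>8 * M / e\<rceil>"
    define T where "T = real N + 1"
    have T0: "T > 0" unfolding T_def by simp
    have "8 * M / e \<le> real N" unfolding N_def by linarith
    then have "8 * M / e < T" unfolding T_def by simp
    then have "8 * M < e * T" using e by (simp add: divide_less_eq mult.commute)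
    then have T1: "4 * M / T < e / 2" using T0 by (simp add: divide_less_eq field_simps)
    define Bx where "Bx = {- int N..int N}"
    have Z: "(\<lambda>k. \<Sum>n\<in>Bx. (cmod (d k n))\<^sup>2) \<longlonglongrightarrow> 0"
    proof -
      have "(\<lambda>k. \<Sum>n\<in>Bx. (cmod (d k n))\<^sup>2) \<longlonglongrightarrow> (\<Sum>n\<in>Bx. (cmod (g n - g n))\<^sup>2)"
        unfolding d_def by (intro tendsto_intros lim)
      then show ?thesis by simp
    qed
    obtain K where K: "\<And>k. k \<ge> K \<Longrightarrow> norm ((\<Sum>n\<in>Bx. (cmod (d k n))\<^sup>2) - 0) < e / 2"
      using LIMSEQ_D[OF Z, of "e/2"] e by auto
    show "\<exists>K. \<forall>k\<ge>K. norm (N2 (d k) - 0) < e"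
    proof (intro exI allI impI)
      fix k assume k: "k \<ge> K"
      have "l2 (d k) \<and> N2 (d k) \<le> (\<Sum>n\<in>Bx. (cmod (d k n))\<^sup>2) + 4 * M / T"
      proof (rule l2_fin_bound)
        fix F :: "int set" assume F: "finite F"
        have "(\<Sum>n\<in>F. (cmod (d k n))\<^sup>2) = (\<Sum>n\<in>F \<inter> Bx. (cmod (d k n))\<^sup>2) + (\<Sum>n\<in>F - Bx. (cmod (d k n))\<^sup>2)"
          by (rule sum.Int_Diff[OF F])
        also have "(\<Sum>n\<in>F \<inter> Bx. (cmod (d k n))\<^sup>2) \<le> (\<Sum>n\<in>Bx. (cmod (d k n))\<^sup>2)"
          by (rule sum_mono2) (auto simp: Bx_def)
        also have "(\<Sum>n\<in>F - Bx. (cmod (d k n))\<^sup>2) \<le> (\<Sum>n\<in>F - Bx. bracket n * (cmod (d k n))\<^sup>2 / T)"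
        proof (rule sum_mono)
          fix n assume n: "n \<in> F - Bx"
          then have "\<bar>n\<bar> > int N" unfolding Bx_def by auto
          then have "T \<le> bracket n" unfolding T_def bracket_def by linarith
          then have "T * (cmod (d k n))\<^sup>2 \<le> bracket n * (cmod (d k n))\<^sup>2" by (intro mult_right_mono) auto
          then show "(cmod (d k n))\<^sup>2 \<le> bracket n * (cmod (d k n))\<^sup>2 / T" using T0 by (simp add: le_divide_eq mult.commute)
        qed
        also have "\<dots> = (\<Sum>n\<in>F - Bx. bracket n * (cmod (d k n))\<^sup>2) / T" by (simp add: sum_divide_distrib)
        also have "\<dots> \<le> 4 * M / T" using dfin[of "F - Bx" k] F T0 by (intro divide_right_mono) auto
        finally show "(\<Sum>n\<in>F. (cmod (d k n))\<^sup>2) \<le> (\<Sum>n\<in>Bx. (cmod (d k n))\<^sup>2) + 4 * M / T" by simp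
      qed
      then have "N2 (d k) \<le> (\<Sum>n\<in>Bx. (cmod (d k n))\<^sup>2) + 4 * M / T" by blast
      moreover have "(\<Sum>n\<in>Bx. (cmod (d k n))\<^sup>2) < e / 2" using K[OF k] by simp
      ultimately show "norm (N2 (d k) - 0) < e" using T1 N2_nonneg[of "d k"] by simp
    qed
  qed
  have "(\<lambda>k. sqrt (N2 (d k))) \<longlonglongrightarrow> sqrt 0" by (rule tendsto_real_sqrt[OF main])
  then have "(\<lambda>k. l2norm (\<lambda>n. h (r k) n - g n)) \<longlonglongrightarrow> 0"
    unfolding l2norm_def N2_def d_def by simp
  then show ?thesis using r_mono g0 by blast
qed

theorem proposition2:
  fixes m :: nat and V :: "int \<Rightarrow> complex"
  assumes "m \<ge> 1"
    and "V \<in> Hs True (- real m)"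
  shows "\<forall>p::bool. resolvent_set p m V \<noteq> {} \<and>
           (\<forall>lam R. is_resolvent p m V lam R \<longrightarrow> compact_L2op p R)"
proof (rule allI)
  fix p :: bool
  define s where "s = s0 m V"
  show "resolvent_set p m V \<noteq> {} \<and> (\<forall>lam R. is_resolvent p m V lam R \<longrightarrow> compact_L2op p R)"
  proof (rule conjI)
  have res: "is_resolvent p m V (- complex_of_real (s\<^sup>2)) (R0 m s V)"
    by (rule R0_res[OF assms(1) assms(2) s_def])
  then show "resolvent_set p m V \<noteq> {}" unfolding resolvent_set_def by blast
  next
  show "\<forall>lam R. is_resolvent p m V lam R \<longrightarrow> compact_L2op p R"
  proof (intro allI impI)
    fix lam R assume R: "is_resolvent p m V lam R"
    obtain B where B0: "B \<ge> 0"
      and B: "\<forall>f\<in>Hs p 0. \<forall>F. finite F \<longrightarrow> (\<Sum>n\<in>F. bb m n * (cmod (R f n))\<^sup>2) \<le> B * N2 f"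
      using R_weighted[OF assms(1,2) s_def R] by blast
    show "compact_L2op p R" unfolding compact_L2op_def
    proof (intro allI impI)
      fix f :: "nat \<Rightarrow> int \<Rightarrow> complex" and Bf :: real
      assume fb: "\<forall>k. f k \<in> Hs p 0 \<and> l2norm (f k) \<le> Bf"
      show "\<exists>r g. strict_mono r \<and> g \<in> Hs p 0 \<and> (\<lambda>k. l2norm (\<lambda>n. R (f (r k)) n - g n)) \<longlonglongrightarrow> 0"
      proof (rule compact_embed[of p "\<lambda>k. R (f k)" "B * Bf\<^sup>2"])
        fix k n assume n: "n \<notin> freqs p"
        have "R (f k) \<in> Sdom p m V" using R fb unfolding is_resolvent_def by blast
        then have "R (f k) \<in> Hs p (real m)" unfolding Sdom_def by simp
        then show "R (f k) n = 0" using n unfolding Hsm_iff by blast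
      next
        fix k and F :: "int set" assume F: "finite F"
        have "(\<Sum>n\<in>F. bracket n * (cmod (R (f k) n))\<^sup>2) \<le> (\<Sum>n\<in>F. bb m n * (cmod (R (f k) n))\<^sup>2)"
        proof (rule sum_mono)
          fix n
          have "bracket n ^ 1 \<le> bracket n ^ (2 * m)"
            using assms(1) bracket_ge1[of n] by (intro power_increasing) auto
          then have "bracket n \<le> bb m n" by (simp add: bb_def)
          then show "bracket n * (cmod (R (f k) n))\<^sup>2 \<le> bb m n * (cmod (R (f k) n))\<^sup>2"
            by (intro mult_right_mono) auto
        qed
        also have "\<dots> \<le> B * N2 (f k)" using B fb F by blast
        also have "\<dots> \<le> B * Bf\<^sup>2"
        proof -
          have "sqrt (N2 (f k)) \<le> Bf" using fb unfolding l2norm_def N2_def by blast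
          then have "(sqrt (N2 (f k)))\<^sup>2 \<le> Bf\<^sup>2" by (intro power_mono) (auto simp: N2_nonneg)
          then have "N2 (f k) \<le> Bf\<^sup>2" using N2_nonneg[of "f k"] by simp
          then show ?thesis using B0 by (intro mult_left_mono) auto
        qed
        finally show "(\<Sum>n\<in>F. bracket n * (cmod (R (f k) n))\<^sup>2) \<le> B * Bf\<^sup>2" .
      qed
    qed
  qed
qed

qed



end
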